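(* Let $N\ge 6$ and $$H=\sum_{i=1}^N\big(J_XX_iX_{i+1}+J_YY_iY_{i+1}+h_XX_i+h_YY_i+h_ZZ_i\big)$$ on a ring of $N$ sites with periodic boundary conditions, with real parameters $J_X\neq0$, $J_Y\neq0$ and $(h_X,h_Y)\neq(0,0)$. Let $Q$ be any operator that is a linear combination of Pauli strings of support at most $2$ and satisfies $[Q,H]=0$. Then: (a) If $N$ is even, $h_Z=0$, $h_X\neq 0$, $h_Y\neq0$ and $J_Y=-J_X\,(h_Y/h_X)^2$, then $Q$ lies in the linear span of $I$, $H$ and $$Q_0=\sum_{i=1}^N(-1)^i\,(h_XX_i+h_YY_i)(h_XX_{i+1}+h_YY_{i+1}),$$ and $Q_0$ indeed commutes with $H$. (b) Otherwise, $Q$ lies in the linear span of $I$ and $H$. In particular, in all cases $H$ has no conserved quantity that is a linear combination of Pauli strings of support at most $1$ other than multiples of $I$.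
   Context: $X_i,Y_i,Z_i$ denote the Pauli matrices on site $i$, $I$ is the identity; site $N+1$ is identified with site $1$. A Pauli string is a tensor product over sites of operators from $\{I,X,Y,Z\}$; its support is the length of the shortest run of consecutive sites (on the ring) containing all its non-identity factors (the identity string has support $0$). *)

theory Defs
  imports Complex_Main
begin

text \<open>Operators on the N-site spin-1/2 chain are represented as (2^N x 2^N) complex
matrices given by their entry functions nat => nat => complex; the computational basis
state with index a < 2^N has the spin of site i (0-based, i < N) given by bit i of a.
Entries with an index >= 2^N are always 0.  Sites are numbered 0..N-1 (paper: 1..N);
site N is identified with site 0.\<close>

type_synonym op = "nat \<Rightarrow> nat \<Rightarrow> complex"

datatype pauli = PI | PX | PY | PZ

definition bit_of :: "nat \<Rightarrow> nat \<Rightarrow> bool" where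
  "bit_of a i = odd (a div 2 ^ i)"

text \<open>Single-site matrix entries (row r, column c); False = basis state 0, True = 1.\<close>
fun pmat :: "pauli \<Rightarrow> bool \<Rightarrow> bool \<Rightarrow> complex" where
  "pmat PI r c = (if r = c then 1 else 0)"
| "pmat PX r c = (if r \<noteq> c then 1 else 0)"
| "pmat PY r c = (if r = c then 0 else if c then - \<i> else \<i>)"
| "pmat PZ r c = (if r \<noteq> c then 0 else if r then -1 else 1)"

definition pstring :: "nat \<Rightarrow> (nat \<Rightarrow> pauli) \<Rightarrow> op" where
  "pstring N s a b =
     (if a < 2 ^ N \<and> b < 2 ^ N
      then (\<Prod>i<N. pmat (s i) (bit_of a i) (bit_of b i)) else 0)"

definition idop :: "nat \<Rightarrow> op" where
  "idop N = pstring N (\<lambda>_. PI)"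

definition site1 :: "nat \<Rightarrow> nat \<Rightarrow> pauli \<Rightarrow> op" where
  "site1 N i P = pstring N ((\<lambda>_. PI)(i := P))"

definition site2 :: "nat \<Rightarrow> nat \<Rightarrow> pauli \<Rightarrow> pauli \<Rightarrow> op" where
  "site2 N i P P' = pstring N ((\<lambda>_. PI)(i := P, (Suc i) mod N := P'))"

definition mmul :: "nat \<Rightarrow> op \<Rightarrow> op \<Rightarrow> op" where
  "mmul N A B = (\<lambda>a b. \<Sum>k<2 ^ N. A a k * B k b)"

definition commutes :: "nat \<Rightarrow> op \<Rightarrow> op \<Rightarrow> bool" where
  "commutes N A B \<longleftrightarrow> mmul N A B = mmul N B A"

text \<open>The run of length k starting at j
consists of the sites i with (i - j) mod N < k.\<close>
definition support :: "nat \<Rightarrow> (nat \<Rightarrow> pauli) \<Rightarrow> nat" where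
  "support N s =
     (if \<forall>i<N. s i = PI then 0
      else (LEAST k. \<exists>j<N. \<forall>i<N. s i \<noteq> PI \<longrightarrow> (i + N - j) mod N < k))"

definition local_op :: "nat \<Rightarrow> nat \<Rightarrow> op \<Rightarrow> bool" where
  "local_op k N Q \<longleftrightarrow>
     (\<exists>S c. finite S \<and> (\<forall>s\<in>S. (\<forall>i\<ge>N. s i = PI) \<and> support N s \<le> k) \<and>
            Q = (\<lambda>a b. \<Sum>s\<in>S. c s * pstring N s a b))"

definition ham :: "nat \<Rightarrow> real \<Rightarrow> real \<Rightarrow> real \<Rightarrow> real \<Rightarrow> real \<Rightarrow> op" where
  "ham N JX JY hX hY hZ = (\<lambda>a b. \<Sum>i<N.
       of_real JX * site2 N i PX PX a b + of_real JY * site2 N i PY PY a b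
     + of_real hX * site1 N i PX a b + of_real hY * site1 N i PY a b
     + of_real hZ * site1 N i PZ a b)"

text \<open>Q0 = sum_i (-1)^i (hX X_i + hY Y_i)(hX X_{i+1} + hY Y_{i+1}) with paper sites 1..N;
0-based site i corresponds to paper site i+1, hence the sign (-1)^(i+1).\<close>
definition Q0 :: "nat \<Rightarrow> real \<Rightarrow> real \<Rightarrow> op" where
  "Q0 N hX hY = (\<lambda>a b. \<Sum>i<N. (-1) ^ (i + 1) *
       mmul N (\<lambda>a b. of_real hX * site1 N i PX a b + of_real hY * site1 N i PY a b)
              (\<lambda>a b. of_real hX * site1 N ((Suc i) mod N) PX a b
                   + of_real hY * site1 N ((Suc i) mod N) PY a b) a b)"

end

theory Submission
  imports Defs
begin

fun pprod :: "pauli \<Rightarrow> pauli \<Rightarrow> pauli" where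
  "pprod PI b = b"
| "pprod PX PI = PX" | "pprod PX PX = PI" | "pprod PX PY = PZ" | "pprod PX PZ = PY"
| "pprod PY PI = PY" | "pprod PY PX = PZ" | "pprod PY PY = PI" | "pprod PY PZ = PX"
| "pprod PZ PI = PZ" | "pprod PZ PX = PY" | "pprod PZ PY = PX" | "pprod PZ PZ = PI"

fun pph :: "pauli \<Rightarrow> pauli \<Rightarrow> complex" where
  "pph PX PY = \<i>" | "pph PY PX = - \<i>"
| "pph PY PZ = \<i>" | "pph PZ PY = - \<i>"
| "pph PZ PX = \<i>" | "pph PX PZ = - \<i>"
| "pph _ _ = 1"

lemma pmat_mult: "pmat a r False * pmat b False c + pmat a r True * pmat b True c
   = pph a b * pmat (pprod a b) r c"
  by (cases a; cases b; cases r; cases c; simp)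

lemma pprod_PI2[simp]: "pprod a PI = a" by (cases a) auto
lemma pph_PI1[simp]: "pph PI a = 1" by (cases a) auto
lemma pph_PI2[simp]: "pph a PI = 1" by (cases a) auto
lemma pprod_self[simp]: "pprod a a = PI" by (cases a) auto
lemma pph_self[simp]: "pph a a = 1" by (cases a) auto
lemma pprod_comm: "pprod a b = pprod b a" by (cases a; cases b) auto
lemma pprod_eq_PI: "pprod a b = PI \<longleftrightarrow> a = b" by (cases a; cases b) auto
lemma pprod_cancel: "pprod (pprod a b) b = a" by (cases a; cases b) auto

definition smul :: "(nat \<Rightarrow> pauli) \<Rightarrow> (nat \<Rightarrow> pauli) \<Rightarrow> nat \<Rightarrow> pauli" where
  "smul s t = (\<lambda>i. pprod (s i) (t i))"
definition sph :: "nat \<Rightarrow> (nat \<Rightarrow> pauli) \<Rightarrow> (nat \<Rightarrow> pauli) \<Rightarrow> complex" where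
  "sph N s t = (\<Prod>i<N. pph (s i) (t i))"

lemma smul_comm: "smul s t = smul t s" by (simp add: smul_def pprod_comm)

lemma bit_of_lt: "k < 2^N \<Longrightarrow> bit_of k N = False"
  by (simp add: bit_of_def)

lemma bit_of_add_low: "i < N \<Longrightarrow> bit_of (k + 2^N) i = bit_of k i"
proof -
  assume "i < N"
  then have "(2::nat)^N = 2^i * 2^(N-i)" by (simp add: power_add[symmetric])
  then have "(k + 2^N) div 2^i = k div 2^i + 2^(N-i)" by simp
  moreover have "even ((2::nat)^(N-i))" using \<open>i<N\<close> by simp
  ultimately show ?thesis by (simp add: bit_of_def)
qed

lemma bit_of_add_top: "k < 2^N \<Longrightarrow> bit_of (k + 2^N) N = True"
proof -
  assume "k < 2^N"
  then have "(k + 2^N) div 2^N = 1"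
    by (simp add: div_add_self2)
  then show ?thesis by (simp add: bit_of_def)
qed

lemma sum_prod_bits:
  fixes f :: "nat \<Rightarrow> bool \<Rightarrow> complex"
  shows
  "(\<Sum>k<2^N. \<Prod>i<N. f i (bit_of k i)) = (\<Prod>i<N. f i False + f i True)"
proof (induction N)
  case 0
  then show ?case by simp
next
  case (Suc N)
  have split: "(\<Sum>k<2^Suc N. g k) = (\<Sum>k<2^N. g k) + (\<Sum>k<2^N. g (k + 2^N))" for g :: "nat \<Rightarrow> complex"
  proof -
    have "(\<Sum>k<2^Suc N. g k) = (\<Sum>k\<in>{0..<2^N}. g k) + (\<Sum>k\<in>{2^N..<2^N+2^N}. g k)"
      by (simp add: sum.atLeastLessThan_concat lessThan_atLeast0 mult_2)
    also have "(\<Sum>k\<in>{2^N..<2^N+2^N}. g k) = (\<Sum>k<2^N. g (k + 2^N))"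
      using sum.shift_bounds_nat_ivl[of g 0 "2^N" "2^N"] by (simp add: lessThan_atLeast0)
    finally show ?thesis by (simp add: lessThan_atLeast0)
  qed
  have A: "(\<Sum>k<2^N. \<Prod>i<Suc N. f i (bit_of k i)) = (\<Sum>k<2^N. \<Prod>i<N. f i (bit_of k i)) * f N False"
    by (simp add: bit_of_lt sum_distrib_right)
  have B: "(\<Sum>k<2^N. \<Prod>i<Suc N. f i (bit_of (k + 2^N) i)) = (\<Sum>k<2^N. \<Prod>i<N. f i (bit_of k i)) * f N True"
    by (simp add: bit_of_add_low bit_of_add_top sum_distrib_right)
  show ?case
    by (simp only: split A B Suc.IH) (simp add: algebra_simps)
qed

lemma mmul_pstring:
  "mmul N (pstring N s) (pstring N t) = (\<lambda>a b. sph N s t * pstring N (smul s t) a b)"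
proof (intro ext)
  fix a b
  show "mmul N (pstring N s) (pstring N t) a b = sph N s t * pstring N (smul s t) a b"
  proof (cases "a < 2^N \<and> b < 2^N")
    case True
    have "mmul N (pstring N s) (pstring N t) a b =
      (\<Sum>k<2^N. \<Prod>i<N. pmat (s i) (bit_of a i) (bit_of k i) * pmat (t i) (bit_of k i) (bit_of b i))"
      using True by (simp add: mmul_def pstring_def prod.distrib)
    also have "\<dots> = (\<Prod>i<N. pmat (s i) (bit_of a i) False * pmat (t i) False (bit_of b i)
                         + pmat (s i) (bit_of a i) True * pmat (t i) True (bit_of b i))"
      by (rule sum_prod_bits)
    also have "\<dots> = (\<Prod>i<N. pph (s i) (t i) * pmat (pprod (s i) (t i)) (bit_of a i) (bit_of b i))"
      by (simp add: pmat_mult)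
    also have "\<dots> = sph N s t * pstring N (smul s t) a b"
      using True by (simp add: prod.distrib sph_def pstring_def smul_def)
    finally show ?thesis .
  next
    case False
    then show ?thesis by (auto simp add: mmul_def pstring_def)
  qed
qed

definition coef :: "nat \<Rightarrow> (nat \<Rightarrow> pauli) \<Rightarrow> op \<Rightarrow> complex" where
  "coef N u M = (\<Sum>a<2^N. \<Sum>b<2^N. pstring N u b a * M a b) / 2^N"

lemma pmat_tr: "pmat w False False + pmat w True True = (if w = PI then 2 else 0)"
  by (cases w) auto

lemma trace_pstring: "(\<Sum>a<2^N. pstring N w a a) = (\<Prod>i<N. if w i = PI then 2 else 0)"
proof -
  have "(\<Sum>a<2^N. pstring N w a a) = (\<Sum>a<2^N. \<Prod>i<N. pmat (w i) (bit_of a i) (bit_of a i))"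
    by (simp add: pstring_def)
  also have "\<dots> = (\<Prod>i<N. pmat (w i) False False + pmat (w i) True True)"
    by (rule sum_prod_bits)
  also have "\<dots> = (\<Prod>i<N. if w i = PI then 2 else 0)"
    by (simp add: pmat_tr)
  finally show ?thesis .
qed

lemma coef_pstring: "coef N u (pstring N s) = (if \<forall>i<N. u i = s i then 1 else 0)"
proof -
  have "(\<Sum>a<2^N. \<Sum>b<2^N. pstring N u b a * pstring N s a b) = (\<Sum>b<2^N. \<Sum>a<2^N. pstring N u b a * pstring N s a b)"
    by (rule sum.swap)
  also have "\<dots> = (\<Sum>b<2^N. mmul N (pstring N u) (pstring N s) b b)"
    by (simp add: mmul_def)
  also have "\<dots> = sph N u s * (\<Sum>b<2^N. pstring N (smul u s) b b)"
    by (simp add: mmul_pstring sum_distrib_left)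
  also have "\<dots> = sph N u s * (\<Prod>i<N. if smul u s i = PI then 2 else 0)"
    by (simp add: trace_pstring)
  finally have E: "(\<Sum>a<2^N. \<Sum>b<2^N. pstring N u b a * pstring N s a b) = sph N u s * (\<Prod>i<N. if smul u s i = PI then 2 else 0)" .
  show ?thesis
  proof (cases "\<forall>i<N. u i = s i")
    case True
    then have "sph N u s = 1" by (simp add: sph_def)
    moreover have "(\<Prod>i<N. if smul u s i = PI then 2 else 0) = (\<Prod>i<N. (2::complex))"
      using True by (intro prod.cong) (auto simp: smul_def)
    ultimately show ?thesis using True E by (simp add: coef_def)
  next
    case False
    then obtain i where "i < N" "u i \<noteq> s i" by auto
    then have "(\<Prod>i<N. if smul u s i = PI then 2 else (0::complex)) = 0"
      by (intro prod_zero) (auto simp: smul_def pprod_eq_PI intro!: bexI[of _ i])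
    then have "coef N u (pstring N s) = 0" unfolding coef_def E by simp
    with False show ?thesis by simp
  qed
qed

lemma coef_mmul_right: "coef N u (mmul N M (pstring N t)) = sph N t u * coef N (smul u t) M"
proof -
  have "(\<Sum>a<2^N. \<Sum>b<2^N. pstring N u b a * mmul N M (pstring N t) a b)
      = (\<Sum>a<2^N. \<Sum>b<2^N. \<Sum>k<2^N. M a k * (pstring N t k b * pstring N u b a))"
    by (simp add: mmul_def sum_distrib_left mult_ac)
  also have "\<dots> = (\<Sum>a<2^N. \<Sum>k<2^N. \<Sum>b<2^N. M a k * (pstring N t k b * pstring N u b a))"
    by (rule sum.cong[OF refl], rule sum.swap)
  also have "\<dots> = (\<Sum>a<2^N. \<Sum>k<2^N. M a k * mmul N (pstring N t) (pstring N u) k a)"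
    by (simp add: mmul_def sum_distrib_left)
  also have "\<dots> = sph N t u * (\<Sum>a<2^N. \<Sum>k<2^N. pstring N (smul u t) k a * M a k)"
    by (simp add: mmul_pstring sum_distrib_left smul_comm mult_ac)
  finally show ?thesis by (simp add: coef_def)
qed

lemma coef_mmul_left: "coef N u (mmul N (pstring N t) M) = sph N u t * coef N (smul u t) M"
proof -
  have "(\<Sum>a<2^N. \<Sum>b<2^N. pstring N u b a * mmul N (pstring N t) M a b)
      = (\<Sum>a<2^N. \<Sum>b<2^N. \<Sum>k<2^N. M k b * (pstring N u b a * pstring N t a k))"
    by (simp add: mmul_def sum_distrib_left mult_ac)
  also have "\<dots> = (\<Sum>b<2^N. \<Sum>a<2^N. \<Sum>k<2^N. M k b * (pstring N u b a * pstring N t a k))"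
    by (rule sum.swap)
  also have "\<dots> = (\<Sum>b<2^N. \<Sum>k<2^N. \<Sum>a<2^N. M k b * (pstring N u b a * pstring N t a k))"
    by (rule sum.cong[OF refl], rule sum.swap)
  also have "\<dots> = (\<Sum>b<2^N. \<Sum>k<2^N. M k b * mmul N (pstring N u) (pstring N t) b k)"
    by (simp add: mmul_def sum_distrib_left)
  also have "\<dots> = sph N u t * (\<Sum>b<2^N. \<Sum>k<2^N. pstring N (smul u t) b k * M k b)"
    by (simp add: mmul_pstring sum_distrib_left mult_ac)
  also have "\<dots> = sph N u t * (\<Sum>k<2^N. \<Sum>b<2^N. pstring N (smul u t) b k * M k b)"
    by (subst sum.swap) (rule refl)
  finally show ?thesis by (simp add: coef_def)
qed

lemma coef_add: "coef N u (\<lambda>a b. A a b + B a b) = coef N u A + coef N u B"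
  by (simp add: coef_def distrib_left sum.distrib add_divide_distrib)
lemma coef_diff: "coef N u (\<lambda>a b. A a b - B a b) = coef N u A - coef N u B"
  by (simp add: coef_def right_diff_distrib sum_subtractf diff_divide_distrib)
lemma coef_cmult: "coef N u (\<lambda>a b. c * A a b) = c * coef N u A"
  by (simp add: coef_def sum_distrib_left mult_ac)
lemma coef_sum: "coef N u (\<lambda>a b. \<Sum>x\<in>X. F x a b) = (\<Sum>x\<in>X. coef N u (F x))"
proof -
  have "(\<Sum>a<2^N. \<Sum>b<2^N. pstring N u b a * (\<Sum>x\<in>X. F x a b))
     = (\<Sum>a<2^N. \<Sum>b<2^N. \<Sum>x\<in>X. pstring N u b a * F x a b)"
    by (simp add: sum_distrib_left)
  also have "\<dots> = (\<Sum>a<2^N. \<Sum>x\<in>X. \<Sum>b<2^N. pstring N u b a * F x a b)"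
    by (rule sum.cong[OF refl], rule sum.swap)
  also have "\<dots> = (\<Sum>x\<in>X. \<Sum>a<2^N. \<Sum>b<2^N. pstring N u b a * F x a b)"
    by (rule sum.swap)
  finally show ?thesis by (simp add: coef_def sum_divide_distrib)
qed

lemma mmul_add_right: "mmul N M (\<lambda>a b. A a b + B a b) = (\<lambda>a b. mmul N M A a b + mmul N M B a b)"
  by (simp add: mmul_def distrib_left sum.distrib)
lemma mmul_cmult_right: "mmul N M (\<lambda>a b. c * A a b) = (\<lambda>a b. c * mmul N M A a b)"
  by (simp add: mmul_def sum_distrib_left mult_ac)
lemma mmul_sum_right: "mmul N M (\<lambda>a b. \<Sum>x\<in>X. F x a b) = (\<lambda>a b. \<Sum>x\<in>X. mmul N M (F x) a b)"
proof (intro ext)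
  fix a b
  have "(\<Sum>k<2^N. M a k * (\<Sum>x\<in>X. F x k b)) = (\<Sum>k<2^N. \<Sum>x\<in>X. M a k * F x k b)"
    by (simp add: sum_distrib_left)
  also have "\<dots> = (\<Sum>x\<in>X. \<Sum>k<2^N. M a k * F x k b)" by (rule sum.swap)
  finally show "mmul N M (\<lambda>a b. \<Sum>x\<in>X. F x a b) a b = (\<Sum>x\<in>X. mmul N M (F x) a b)"
    by (simp add: mmul_def)
qed
lemma mmul_add_left: "mmul N (\<lambda>a b. A a b + B a b) M = (\<lambda>a b. mmul N A M a b + mmul N B M a b)"
  by (simp add: mmul_def distrib_right sum.distrib)
lemma mmul_cmult_left: "mmul N (\<lambda>a b. c * A a b) M = (\<lambda>a b. c * mmul N A M a b)"
  by (simp add: mmul_def sum_distrib_left mult_ac)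
lemma mmul_sum_left: "mmul N (\<lambda>a b. \<Sum>x\<in>X. F x a b) M = (\<lambda>a b. \<Sum>x\<in>X. mmul N (F x) M a b)"
proof (intro ext)
  fix a b
  have "(\<Sum>k<2^N. (\<Sum>x\<in>X. F x a k) * M k b) = (\<Sum>k<2^N. \<Sum>x\<in>X. F x a k * M k b)"
    by (simp add: sum_distrib_right)
  also have "\<dots> = (\<Sum>x\<in>X. \<Sum>k<2^N. F x a k * M k b)" by (rule sum.swap)
  finally show "mmul N (\<lambda>a b. \<Sum>x\<in>X. F x a b) M a b = (\<Sum>x\<in>X. mmul N (F x) M a b)"
    by (simp add: mmul_def)
qed

definition t1 :: "nat \<Rightarrow> pauli \<Rightarrow> nat \<Rightarrow> pauli" where
  "t1 i P = (\<lambda>_. PI)(i := P)"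
definition t2 :: "nat \<Rightarrow> nat \<Rightarrow> pauli \<Rightarrow> pauli \<Rightarrow> nat \<Rightarrow> pauli" where
  "t2 N i P P' = (\<lambda>_. PI)(i := P, Suc i mod N := P')"

lemma site1_t: "site1 N i P = pstring N (t1 i P)" by (simp add: site1_def t1_def)
lemma site2_t: "site2 N i P P' = pstring N (t2 N i P P')" by (simp add: site2_def t2_def)

definition Fj :: "nat \<Rightarrow> real \<Rightarrow> real \<Rightarrow> real \<Rightarrow> real \<Rightarrow> real \<Rightarrow> ((nat \<Rightarrow> pauli) \<Rightarrow> complex)
   \<Rightarrow> (nat \<Rightarrow> pauli) \<Rightarrow> nat \<Rightarrow> complex" where
  "Fj N JX JY hX hY hZ q u i =
     of_real JX * (sph N (t2 N i PX PX) u - sph N u (t2 N i PX PX)) * q (smul u (t2 N i PX PX))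
   + of_real JY * (sph N (t2 N i PY PY) u - sph N u (t2 N i PY PY)) * q (smul u (t2 N i PY PY))
   + of_real hX * (sph N (t1 i PX) u - sph N u (t1 i PX)) * q (smul u (t1 i PX))
   + of_real hY * (sph N (t1 i PY) u - sph N u (t1 i PY)) * q (smul u (t1 i PY))
   + of_real hZ * (sph N (t1 i PZ) u - sph N u (t1 i PZ)) * q (smul u (t1 i PZ))"

lemma comm_eq:
  assumes "commutes N Q (ham N JX JY hX hY hZ)"
  shows "(\<Sum>i<N. Fj N JX JY hX hY hZ (\<lambda>w. coef N w Q) u i) = 0"
proof -
  have e: "coef N u (mmul N Q (ham N JX JY hX hY hZ)) = coef N u (mmul N (ham N JX JY hX hY hZ) Q)"
    using assms by (simp add: commutes_def)
  have l: "coef N u (mmul N Q (ham N JX JY hX hY hZ)) = (\<Sum>i<N.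
       of_real JX * (sph N (t2 N i PX PX) u * coef N (smul u (t2 N i PX PX)) Q)
     + of_real JY * (sph N (t2 N i PY PY) u * coef N (smul u (t2 N i PY PY)) Q)
     + of_real hX * (sph N (t1 i PX) u * coef N (smul u (t1 i PX)) Q)
     + of_real hY * (sph N (t1 i PY) u * coef N (smul u (t1 i PY)) Q)
     + of_real hZ * (sph N (t1 i PZ) u * coef N (smul u (t1 i PZ)) Q))"
    unfolding ham_def site1_t site2_t
    by (simp only: mmul_sum_right mmul_add_right mmul_cmult_right coef_sum coef_add coef_cmult coef_mmul_right)
  have r: "coef N u (mmul N (ham N JX JY hX hY hZ) Q) = (\<Sum>i<N.
       of_real JX * (sph N u (t2 N i PX PX) * coef N (smul u (t2 N i PX PX)) Q)
     + of_real JY * (sph N u (t2 N i PY PY) * coef N (smul u (t2 N i PY PY)) Q)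
     + of_real hX * (sph N u (t1 i PX) * coef N (smul u (t1 i PX)) Q)
     + of_real hY * (sph N u (t1 i PY) * coef N (smul u (t1 i PY)) Q)
     + of_real hZ * (sph N u (t1 i PZ) * coef N (smul u (t1 i PZ)) Q))"
    unfolding ham_def site1_t site2_t
    by (simp only: mmul_sum_left mmul_add_left mmul_cmult_left coef_sum coef_add coef_cmult coef_mmul_left)
  have "(\<Sum>i<N. Fj N JX JY hX hY hZ (\<lambda>w. coef N w Q) u i)
      = coef N u (mmul N Q (ham N JX JY hX hY hZ)) - coef N u (mmul N (ham N JX JY hX hY hZ) Q)"
    unfolding l r Fj_def by (simp add: sum_subtractf[symmetric] algebra_simps)
  then show ?thesis using e by simp
qed


definition form2 :: "nat \<Rightarrow> (nat \<Rightarrow> pauli) \<Rightarrow> bool" where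
  "form2 N w \<longleftrightarrow> (\<exists>j<N. \<forall>k<N. w k \<noteq> PI \<longrightarrow> k = j \<or> k = Suc j mod N)"

definition canon :: "nat \<Rightarrow> (nat \<Rightarrow> pauli) \<Rightarrow> bool" where
  "canon N w \<longleftrightarrow> (\<forall>i\<ge>N. w i = PI)"


lemma modlem: fixes i j N :: nat assumes "i < N" "j < N" "(i + N - j) mod N < 2"
  shows "i = j \<or> i = Suc j mod N"
proof (cases "j \<le> i")
  case True
  then have h: "i + N - j = (i - j) + N" by arith
  have "(i + N - j) mod N = (i - j) mod N" unfolding h by (rule mod_add_self2)
  also have "\<dots> = i - j" using assms by simp
  finally have "(i + N - j) mod N = i - j" .
  then have "i - j < 2" using assms by simp
  then have "i = j \<or> i = Suc j" using True by linarith
  moreover have "i = Suc j \<Longrightarrow> Suc j mod N = Suc j" using assms by simp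
  ultimately show ?thesis by auto
next
  case False
  then have "(i + N - j) mod N = i + N - j" using assms by (intro mod_less) linarith
  then have "i + N - j < 2" using assms by simp
  then have "Suc j = N" "i = 0" using False assms by linarith+
  then show ?thesis by simp
qed

lemma modlem1: fixes i j N :: nat assumes "i < N" "j < N" "(i + N - j) mod N < 1"
  shows "i = j"
proof (cases "j \<le> i")
  case True
  then have h: "i + N - j = (i - j) + N" by arith
  have "(i + N - j) mod N = (i - j) mod N" unfolding h by (rule mod_add_self2)
  also have "\<dots> = i - j" using assms by simp
  finally have "(i + N - j) mod N = i - j" .
  then show ?thesis using assms True by simp
next
  case False
  then have "(i + N - j) mod N = i + N - j" using assms by simp
  then show ?thesis using assms False by simp
qed

lemma support_witness:
  assumes "support N s \<le> k" "0 < N" "\<exists>i<N. s i \<noteq> PI"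
  shows "\<exists>j<N. \<forall>i<N. s i \<noteq> PI \<longrightarrow> (i + N - j) mod N < k"
proof -
  let ?P = "\<lambda>k. \<exists>j<N. \<forall>i<N. s i \<noteq> PI \<longrightarrow> (i + N - j) mod N < k"
  have "?P N" using assms(2) by (intro exI[of _ 0]) auto
  then have "?P (LEAST k. ?P k)" by (rule LeastI)
  moreover have "support N s = (LEAST k. ?P k)" using assms(3) by (auto simp: support_def)
  ultimately obtain j where "j < N" "\<forall>i<N. s i \<noteq> PI \<longrightarrow> (i + N - j) mod N < support N s" by auto
  then show ?thesis using assms(1) by (intro exI[of _ j]) auto
qed

lemma support_le2: assumes "support N s \<le> 2" "0 < N" shows "form2 N s"
proof (cases "\<exists>i<N. s i \<noteq> PI")
  case True
  then obtain j where "j < N" "\<forall>i<N. s i \<noteq> PI \<longrightarrow> (i + N - j) mod N < 2"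
    using support_witness[OF assms True] by blast
  then show ?thesis unfolding form2_def using modlem by blast
next
  case False
  then show ?thesis unfolding form2_def using assms by auto
qed

lemma support_le1: assumes "support N s \<le> 1" "0 < N" "a < N" "b < N" "s a \<noteq> PI" "s b \<noteq> PI"
  shows "a = b"
proof -
  have "\<exists>i<N. s i \<noteq> PI" using assms by auto
  then obtain j where "j < N" "\<forall>i<N. s i \<noteq> PI \<longrightarrow> (i + N - j) mod N < 1"
    using support_witness[OF assms(1,2)] by blast
  then show ?thesis using modlem1 assms by metis
qed

definition loc :: "nat \<Rightarrow> ((nat \<Rightarrow> pauli) \<Rightarrow> complex) \<Rightarrow> bool" where
  "loc N q \<longleftrightarrow> (\<forall>w. q w \<noteq> 0 \<longrightarrow> form2 N w)"

lemma coef_lincomb: "coef N w (\<lambda>a b. \<Sum>s\<in>S. c s * pstring N s a b) = (\<Sum>s\<in>S. c s * (if \<forall>i<N. w i = s i then 1 else 0))"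
  by (simp add: coef_sum coef_cmult coef_pstring)

lemma coef_lincomb_nz:
  assumes "coef N w (\<lambda>a b. \<Sum>s\<in>S. c s * pstring N s a b) \<noteq> 0"
  shows "\<exists>s\<in>S. \<forall>i<N. w i = s i"
proof (rule ccontr)
  assume "\<not> ?thesis"
  then have "(\<Sum>s\<in>S. c s * (if \<forall>i<N. w i = s i then 1 else 0)) = 0"
    by (intro sum.neutral) auto
  then show False using assms by (simp add: coef_lincomb)
qed

lemma form2_cong: "form2 N s \<Longrightarrow> \<forall>i<N. w i = s i \<Longrightarrow> form2 N w"
  unfolding form2_def by metis

lemma local2_loc: assumes "local_op 2 N Q" "0 < N" shows "loc N (\<lambda>w. coef N w Q)"
proof -
  obtain S c where S: "finite S" "\<forall>s\<in>S. (\<forall>i\<ge>N. s i = PI) \<and> support N s \<le> 2"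
     "Q = (\<lambda>a b. \<Sum>s\<in>S. c s * pstring N s a b)"
    using assms(1) unfolding local_op_def by blast
  show ?thesis unfolding loc_def
  proof (intro allI impI)
    fix w assume "coef N w Q \<noteq> 0"
    then obtain s where "s \<in> S" "\<forall>i<N. w i = s i" using coef_lincomb_nz S(3) by blast
    then show "form2 N w" using S(2) support_le2 assms(2) form2_cong by blast
  qed
qed

lemma modcancel: fixes p i j N :: nat assumes "(p + i) mod N = (p + j) mod N" "i < N" "j < N" shows "i = j"
proof (rule ccontr)
  assume ne: "i \<noteq> j"
  have *: False if ab: "a < b" "b < N" "(p+a) mod N = (p+b) mod N" for a b :: nat
  proof -
    have "N dvd (p+b) - (p+a)" using mod_eq_dvd_iff_nat[of "p+a" "p+b" N] ab by simp
    then have "N dvd b - a" by simp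
    moreover have "0 < b - a" using ab by simp
    ultimately have "N \<le> b - a" by (rule dvd_imp_le)
    then show False using ab by simp
  qed
  show False
  proof (cases "i < j")
    case True then show False using * assms by blast
  next
    case False then have "j < i" using ne by simp
    then show False using * assms by metis
  qed
qed

lemma nx_inj: fixes a b N :: nat assumes "a < N" "b < N" "Suc a mod N = Suc b mod N" shows "a = b"
  using modcancel[of 1 a N b] assms by simp

lemma far_zero: assumes "loc N q" "a < N" "b < N" "a \<noteq> b" "b \<noteq> Suc a mod N" "a \<noteq> Suc b mod N"
   "w a \<noteq> PI" "w b \<noteq> PI" shows "q w = 0"
proof (rule ccontr)
  assume "q w \<noteq> 0"
  then obtain j where "j < N" "\<forall>k<N. w k \<noteq> PI \<longrightarrow> k = j \<or> k = Suc j mod N"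
    using assms(1) unfolding loc_def form2_def by blast
  then show False using assms by metis
qed

lemma sph_disj: "\<forall>k<N. t k = PI \<or> u k = PI \<Longrightarrow> sph N t u = 1"
  unfolding sph_def by (rule prod.neutral) auto
lemma sph_disj': "\<forall>k<N. t k = PI \<or> u k = PI \<Longrightarrow> sph N u t = 1"
  unfolding sph_def by (rule prod.neutral) auto

lemma suc_mod_ne: assumes "1 < N" shows "Suc i mod N \<noteq> i"
proof
  assume h: "Suc i mod N = i"
  have "Suc i mod N < N" using assms by simp
  then have "i < N" using h by simp
  show False
  proof (cases "Suc i = N")
    case True then show False using h assms by simp
  next
    case False then show False using h \<open>i < N\<close> by simp
  qed
qed

lemma t2_PI2[simp]: "1 < N \<Longrightarrow> t2 N i a PI = t1 i a"
  using suc_mod_ne[of N i] by (auto simp: t2_def t1_def fun_eq_iff)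
lemma t2_PI1[simp]: "t2 N i PI b = t1 (Suc i mod N) b"
  by (auto simp: t2_def t1_def fun_eq_iff)
lemma t1_PI[simp]: "t1 i PI = (\<lambda>_. PI)" by (simp add: t1_def fun_eq_iff)

locale wind =
  fixes N p :: nat
  assumes N6: "6 \<le> N" and pN: "p < N"
begin

definition "w1 = Suc p mod N"
definition "w2 = Suc w1 mod N"
definition "w3 = Suc w2 mod N"
definition "w4 = Suc w3 mod N"
definition "w5 = Suc w4 mod N"

lemma wk: "w1 = (p + 1) mod N" "w2 = (p + 2) mod N" "w3 = (p + 3) mod N" "w4 = (p + 4) mod N" "w5 = (p + 5) mod N"
  by (simp_all add: w1_def w2_def w3_def w4_def w5_def mod_Suc_eq eval_nat_numeral)

lemma w0k: "p = (p + 0) mod N" using pN by simp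

lemma wlt[simp]: "w1 < N" "w2 < N" "w3 < N" "w4 < N" "w5 < N" "p < N"
  using N6 pN by (simp_all add: wk)

lemma wsuc[simp]: "Suc p mod N = w1" "Suc w1 mod N = w2" "Suc w2 mod N = w3" "Suc w3 mod N = w4" "Suc w4 mod N = w5"
  by (simp_all add: w1_def w2_def w3_def w4_def w5_def)

lemma wd: "i \<le> 5 \<Longrightarrow> j \<le> 5 \<Longrightarrow> i \<noteq> j \<Longrightarrow> (p + i) mod N \<noteq> (p + j) mod N"
  using modcancel[of p i N j] N6 by auto
lemma wdist_0_1[simp]: "p \<noteq> w1" using wd[of 0 1] pN unfolding wk by (simp del: wsuc)
lemma wdist_0_2[simp]: "p \<noteq> w2" using wd[of 0 2] pN unfolding wk by (simp del: wsuc)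
lemma wdist_0_3[simp]: "p \<noteq> w3" using wd[of 0 3] pN unfolding wk by (simp del: wsuc)
lemma wdist_0_4[simp]: "p \<noteq> w4" using wd[of 0 4] pN unfolding wk by (simp del: wsuc)
lemma wdist_0_5[simp]: "p \<noteq> w5" using wd[of 0 5] pN unfolding wk by (simp del: wsuc)
lemma wdist_1_0[simp]: "w1 \<noteq> p" using wd[of 1 0] pN unfolding wk by (simp del: wsuc)
lemma wdist_1_2[simp]: "w1 \<noteq> w2" using wd[of 1 2] pN unfolding wk by (simp del: wsuc)
lemma wdist_1_3[simp]: "w1 \<noteq> w3" using wd[of 1 3] pN unfolding wk by (simp del: wsuc)
lemma wdist_1_4[simp]: "w1 \<noteq> w4" using wd[of 1 4] pN unfolding wk by (simp del: wsuc)
lemma wdist_1_5[simp]: "w1 \<noteq> w5" using wd[of 1 5] pN unfolding wk by (simp del: wsuc)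
lemma wdist_2_0[simp]: "w2 \<noteq> p" using wd[of 2 0] pN unfolding wk by (simp del: wsuc)
lemma wdist_2_1[simp]: "w2 \<noteq> w1" using wd[of 2 1] pN unfolding wk by (simp del: wsuc)
lemma wdist_2_3[simp]: "w2 \<noteq> w3" using wd[of 2 3] pN unfolding wk by (simp del: wsuc)
lemma wdist_2_4[simp]: "w2 \<noteq> w4" using wd[of 2 4] pN unfolding wk by (simp del: wsuc)
lemma wdist_2_5[simp]: "w2 \<noteq> w5" using wd[of 2 5] pN unfolding wk by (simp del: wsuc)
lemma wdist_3_0[simp]: "w3 \<noteq> p" using wd[of 3 0] pN unfolding wk by (simp del: wsuc)
lemma wdist_3_1[simp]: "w3 \<noteq> w1" using wd[of 3 1] pN unfolding wk by (simp del: wsuc)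
lemma wdist_3_2[simp]: "w3 \<noteq> w2" using wd[of 3 2] pN unfolding wk by (simp del: wsuc)
lemma wdist_3_4[simp]: "w3 \<noteq> w4" using wd[of 3 4] pN unfolding wk by (simp del: wsuc)
lemma wdist_3_5[simp]: "w3 \<noteq> w5" using wd[of 3 5] pN unfolding wk by (simp del: wsuc)
lemma wdist_4_0[simp]: "w4 \<noteq> p" using wd[of 4 0] pN unfolding wk by (simp del: wsuc)
lemma wdist_4_1[simp]: "w4 \<noteq> w1" using wd[of 4 1] pN unfolding wk by (simp del: wsuc)
lemma wdist_4_2[simp]: "w4 \<noteq> w2" using wd[of 4 2] pN unfolding wk by (simp del: wsuc)
lemma wdist_4_3[simp]: "w4 \<noteq> w3" using wd[of 4 3] pN unfolding wk by (simp del: wsuc)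
lemma wdist_4_5[simp]: "w4 \<noteq> w5" using wd[of 4 5] pN unfolding wk by (simp del: wsuc)
lemma wdist_5_0[simp]: "w5 \<noteq> p" using wd[of 5 0] pN unfolding wk by (simp del: wsuc)
lemma wdist_5_1[simp]: "w5 \<noteq> w1" using wd[of 5 1] pN unfolding wk by (simp del: wsuc)
lemma wdist_5_2[simp]: "w5 \<noteq> w2" using wd[of 5 2] pN unfolding wk by (simp del: wsuc)
lemma wdist_5_3[simp]: "w5 \<noteq> w3" using wd[of 5 3] pN unfolding wk by (simp del: wsuc)
lemma wdist_5_4[simp]: "w5 \<noteq> w4" using wd[of 5 4] pN unfolding wk by (simp del: wsuc)


definition wn :: "pauli \<Rightarrow> pauli \<Rightarrow> pauli \<Rightarrow> pauli \<Rightarrow> pauli \<Rightarrow> nat \<Rightarrow> pauli" where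
  "wn a0 a1 a2 a3 a4 = (\<lambda>_. PI)(p := a0, w1 := a1, w2 := a2, w3 := a3, w4 := a4)"

lemma wn_apply: "wn a0 a1 a2 a3 a4 x = (if x = p then a0 else if x = w1 then a1 else if x = w2 then a2
   else if x = w3 then a3 else if x = w4 then a4 else PI)"
  by (auto simp: wn_def)

lemma smul_wn: "smul (wn a0 a1 a2 a3 a4) (wn b0 b1 b2 b3 b4) =
   wn (pprod a0 b0) (pprod a1 b1) (pprod a2 b2) (pprod a3 b3) (pprod a4 b4)"
  by (auto simp: fun_eq_iff smul_def wn_apply)

lemma sph_wn: "sph N (wn a0 a1 a2 a3 a4) (wn b0 b1 b2 b3 b4) =
   pph a0 b0 * pph a1 b1 * pph a2 b2 * pph a3 b3 * pph a4 b4"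
proof -
  have "sph N (wn a0 a1 a2 a3 a4) (wn b0 b1 b2 b3 b4) =
     (\<Prod>i\<in>{p,w1,w2,w3,w4}. pph (wn a0 a1 a2 a3 a4 i) (wn b0 b1 b2 b3 b4 i))"
    unfolding sph_def by (rule prod.mono_neutral_right) (auto simp: wn_apply)
  then show ?thesis by (simp add: wn_apply)
qed

lemma t_wn:
  "t2 N p P P' = wn P P' PI PI PI" "t2 N w1 P P' = wn PI P P' PI PI"
  "t2 N w2 P P' = wn PI PI P P' PI" "t2 N w3 P P' = wn PI PI PI P P'"
  "t1 p P = wn P PI PI PI PI" "t1 w1 P = wn PI P PI PI PI" "t1 w2 P = wn PI PI P PI PI"
  "t1 w3 P = wn PI PI PI P PI"
  by (auto simp: fun_eq_iff t2_def t1_def wn_apply)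

lemma wn_t:
  "wn a0 a1 PI PI PI = t2 N p a0 a1" "wn PI a1 a2 PI PI = t2 N w1 a1 a2"
  "wn PI PI a2 a3 PI = t2 N w2 a2 a3" "wn PI PI PI a3 a4 = t2 N w3 a3 a4"
  by (auto simp: fun_eq_iff t2_def wn_apply)

lemma wn_far:
  assumes "loc N q"
  shows "a0 \<noteq> PI \<Longrightarrow> a2 \<noteq> PI \<Longrightarrow> q (wn a0 a1 a2 a3 a4) = 0"
    "a0 \<noteq> PI \<Longrightarrow> a3 \<noteq> PI \<Longrightarrow> q (wn a0 a1 a2 a3 a4) = 0"
    "a0 \<noteq> PI \<Longrightarrow> a4 \<noteq> PI \<Longrightarrow> q (wn a0 a1 a2 a3 a4) = 0"
    "a1 \<noteq> PI \<Longrightarrow> a3 \<noteq> PI \<Longrightarrow> q (wn a0 a1 a2 a3 a4) = 0"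
    "a1 \<noteq> PI \<Longrightarrow> a4 \<noteq> PI \<Longrightarrow> q (wn a0 a1 a2 a3 a4) = 0"
    "a2 \<noteq> PI \<Longrightarrow> a4 \<noteq> PI \<Longrightarrow> q (wn a0 a1 a2 a3 a4) = 0"
  apply (rule far_zero[OF assms, of p w2]; simp add: wn_apply)
  apply (rule far_zero[OF assms, of p w3]; simp add: wn_apply)
  apply (rule far_zero[OF assms, of p w4]; simp add: wn_apply)
  apply (rule far_zero[OF assms, of w1 w3]; simp add: wn_apply)
  apply (rule far_zero[OF assms, of w1 w4]; simp add: wn_apply)
  apply (rule far_zero[OF assms, of w2 w4]; simp add: wn_apply)
  done

lemma succ_notin: "i < N \<Longrightarrow> i \<notin> {p, w1, w2, w3} \<Longrightarrow> Suc i mod N \<noteq> w1 \<and> Suc i mod N \<noteq> w2 \<and> Suc i mod N \<noteq> w3"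
proof -
  assume a: "i < N" "i \<notin> {p, w1, w2, w3}"
  have "Suc i mod N \<noteq> Suc p mod N" "Suc i mod N \<noteq> Suc w1 mod N" "Suc i mod N \<noteq> Suc w2 mod N"
    using nx_inj[of i N p] nx_inj[of i N w1] nx_inj[of i N w2] a by auto
  then show ?thesis by simp
qed

lemma window_sum:
  "(\<Sum>i<N. Fj N JX JY hX hY hZ q (wn PI A D C PI) i) =
    Fj N JX JY hX hY hZ q (wn PI A D C PI) p + Fj N JX JY hX hY hZ q (wn PI A D C PI) w1
  + Fj N JX JY hX hY hZ q (wn PI A D C PI) w2 + Fj N JX JY hX hY hZ q (wn PI A D C PI) w3"
proof -
  have "(\<Sum>i<N. Fj N JX JY hX hY hZ q (wn PI A D C PI) i) = (\<Sum>i\<in>{p,w1,w2,w3}. Fj N JX JY hX hY hZ q (wn PI A D C PI) i)"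
  proof (rule sum.mono_neutral_right)
    show "\<forall>i\<in>{..<N} - {p, w1, w2, w3}. Fj N JX JY hX hY hZ q (wn PI A D C PI) i = 0"
    proof
      fix i assume i: "i \<in> {..<N} - {p, w1, w2, w3}"
      then have s: "Suc i mod N \<noteq> w1 \<and> Suc i mod N \<noteq> w2 \<and> Suc i mod N \<noteq> w3" using succ_notin by auto
      have d: "\<forall>k<N. t k = PI \<or> wn PI A D C PI k = PI" if "\<forall>k. t k \<noteq> PI \<longrightarrow> k = i \<or> k = Suc i mod N" for t
        using that i s by (auto simp: wn_apply)
      have "\<forall>k. t2 N i P P' k \<noteq> PI \<longrightarrow> k = i \<or> k = Suc i mod N" for P P' by (auto simp: t2_def)
      moreover have "\<forall>k. t1 i P k \<noteq> PI \<longrightarrow> k = i \<or> k = Suc i mod N" for P by (auto simp: t1_def)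
      ultimately show "Fj N JX JY hX hY hZ q (wn PI A D C PI) i = 0"
        unfolding Fj_def using d sph_disj sph_disj' by simp
    qed
  qed auto
  then show ?thesis by simp
qed

end

context wind begin

lemma we_XXY:
  assumes "loc N q" "\<forall>u. (\<Sum>i<N. Fj N JX JY hX hY hZ q u i) = 0"
  shows "- of_real JY * q (t2 N w1 PX PZ) = 0"
proof -
  have "(\<Sum>i<N. Fj N JX JY hX hY hZ q (wn PI PX PX PY PI) i) = 2 * \<i> * (- of_real JY * q (t2 N w1 PX PZ))"
    using assms(1)
    apply (simp only: window_sum)
    apply (simp only: Fj_def t_wn smul_wn sph_wn)
    apply (simp add: wn_t wn_far N6 algebra_simps)
    done
  then show ?thesis using assms(2) by simp
qed

lemma we_YYX:
  assumes "loc N q" "\<forall>u. (\<Sum>i<N. Fj N JX JY hX hY hZ q u i) = 0"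
  shows "of_real JX * q (t2 N w1 PY PZ) = 0"
proof -
  have "(\<Sum>i<N. Fj N JX JY hX hY hZ q (wn PI PY PY PX PI) i) = 2 * \<i> * (of_real JX * q (t2 N w1 PY PZ))"
    using assms(1)
    apply (simp only: window_sum)
    apply (simp only: Fj_def t_wn smul_wn sph_wn)
    apply (simp add: wn_t wn_far N6 algebra_simps)
    done
  then show ?thesis using assms(2) by simp
qed

lemma we_ZXY:
  assumes "loc N q" "\<forall>u. (\<Sum>i<N. Fj N JX JY hX hY hZ q u i) = 0"
  shows "- of_real JY * q (t2 N w1 PZ PZ) = 0"
proof -
  have "(\<Sum>i<N. Fj N JX JY hX hY hZ q (wn PI PZ PX PY PI) i) = 2 * \<i> * (- of_real JY * q (t2 N w1 PZ PZ))"
    using assms(1)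
    apply (simp only: window_sum)
    apply (simp only: Fj_def t_wn smul_wn sph_wn)
    apply (simp add: wn_t wn_far N6 algebra_simps)
    done
  then show ?thesis using assms(2) by simp
qed

lemma we_ZZX:
  assumes "loc N q" "\<forall>u. (\<Sum>i<N. Fj N JX JY hX hY hZ q u i) = 0"
  shows "- of_real JX * q (t2 N w1 PZ PY) = 0"
proof -
  have "(\<Sum>i<N. Fj N JX JY hX hY hZ q (wn PI PZ PZ PX PI) i) = 2 * \<i> * (- of_real JX * q (t2 N w1 PZ PY))"
    using assms(1)
    apply (simp only: window_sum)
    apply (simp only: Fj_def t_wn smul_wn sph_wn)
    apply (simp add: wn_t wn_far N6 algebra_simps)
    done
  then show ?thesis using assms(2) by simp
qed

lemma we_ZZY:
  assumes "loc N q" "\<forall>u. (\<Sum>i<N. Fj N JX JY hX hY hZ q u i) = 0"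
  shows "of_real JY * q (t2 N w1 PZ PX) = 0"
proof -
  have "(\<Sum>i<N. Fj N JX JY hX hY hZ q (wn PI PZ PZ PY PI) i) = 2 * \<i> * (of_real JY * q (t2 N w1 PZ PX))"
    using assms(1)
    apply (simp only: window_sum)
    apply (simp only: Fj_def t_wn smul_wn sph_wn)
    apply (simp add: wn_t wn_far N6 algebra_simps)
    done
  then show ?thesis using assms(2) by simp
qed

lemma we_XZX:
  assumes "loc N q" "\<forall>u. (\<Sum>i<N. Fj N JX JY hX hY hZ q u i) = 0"
  shows "- of_real JX * q (t2 N w1 PX PY) - of_real JX * q (t2 N w2 PY PX) = 0"
proof -
  have "(\<Sum>i<N. Fj N JX JY hX hY hZ q (wn PI PX PZ PX PI) i) = 2 * \<i> * (- of_real JX * q (t2 N w1 PX PY) - of_real JX * q (t2 N w2 PY PX))"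
    using assms(1)
    apply (simp only: window_sum)
    apply (simp only: Fj_def t_wn smul_wn sph_wn)
    apply (simp add: wn_t wn_far N6 algebra_simps)
    done
  then show ?thesis using assms(2) by simp
qed

lemma we_YZY:
  assumes "loc N q" "\<forall>u. (\<Sum>i<N. Fj N JX JY hX hY hZ q u i) = 0"
  shows "of_real JY * q (t2 N w1 PY PX) + of_real JY * q (t2 N w2 PX PY) = 0"
proof -
  have "(\<Sum>i<N. Fj N JX JY hX hY hZ q (wn PI PY PZ PY PI) i) = 2 * \<i> * (of_real JY * q (t2 N w1 PY PX) + of_real JY * q (t2 N w2 PX PY))"
    using assms(1)
    apply (simp only: window_sum)
    apply (simp only: Fj_def t_wn smul_wn sph_wn)
    apply (simp add: wn_t wn_far N6 algebra_simps)
    done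
  then show ?thesis using assms(2) by simp
qed

lemma we_XZY:
  assumes "loc N q" "\<forall>u. (\<Sum>i<N. Fj N JX JY hX hY hZ q u i) = 0"
  shows "- of_real JX * q (t2 N w2 PY PY) + of_real JY * q (t2 N w1 PX PX) = 0"
proof -
  have "(\<Sum>i<N. Fj N JX JY hX hY hZ q (wn PI PX PZ PY PI) i) = 2 * \<i> * (- of_real JX * q (t2 N w2 PY PY) + of_real JY * q (t2 N w1 PX PX))"
    using assms(1)
    apply (simp only: window_sum)
    apply (simp only: Fj_def t_wn smul_wn sph_wn)
    apply (simp add: wn_t wn_far N6 algebra_simps)
    done
  then show ?thesis using assms(2) by simp
qed

lemma we_YZX:
  assumes "loc N q" "\<forall>u. (\<Sum>i<N. Fj N JX JY hX hY hZ q u i) = 0"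
  shows "- of_real JX * q (t2 N w1 PY PY) + of_real JY * q (t2 N w2 PX PX) = 0"
proof -
  have "(\<Sum>i<N. Fj N JX JY hX hY hZ q (wn PI PY PZ PX PI) i) = 2 * \<i> * (- of_real JX * q (t2 N w1 PY PY) + of_real JY * q (t2 N w2 PX PX))"
    using assms(1)
    apply (simp only: window_sum)
    apply (simp only: Fj_def t_wn smul_wn sph_wn)
    apply (simp add: wn_t wn_far N6 algebra_simps)
    done
  then show ?thesis using assms(2) by simp
qed

lemma we_IXX:
  assumes "loc N q" "\<forall>u. (\<Sum>i<N. Fj N JX JY hX hY hZ q u i) = 0"
  shows "- of_real hY * q (t2 N w2 PX PZ) - of_real hY * q (t2 N w2 PZ PX) + of_real hZ * q (t2 N w2 PX PY) + of_real hZ * q (t2 N w2 PY PX) = 0"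
proof -
  have "(\<Sum>i<N. Fj N JX JY hX hY hZ q (wn PI PI PX PX PI) i) = 2 * \<i> * (- of_real hY * q (t2 N w2 PX PZ) - of_real hY * q (t2 N w2 PZ PX) + of_real hZ * q (t2 N w2 PX PY) + of_real hZ * q (t2 N w2 PY PX))"
    using assms(1)
    apply (simp only: window_sum)
    apply (simp only: Fj_def t_wn smul_wn sph_wn)
    apply (simp add: wn_t wn_far N6 algebra_simps)
    done
  then show ?thesis using assms(2) by simp
qed

lemma we_IYY:
  assumes "loc N q" "\<forall>u. (\<Sum>i<N. Fj N JX JY hX hY hZ q u i) = 0"
  shows "of_real hX * q (t2 N w2 PY PZ) + of_real hX * q (t2 N w2 PZ PY) - of_real hZ * q (t2 N w2 PX PY) - of_real hZ * q (t2 N w2 PY PX) = 0"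
proof -
  have "(\<Sum>i<N. Fj N JX JY hX hY hZ q (wn PI PI PY PY PI) i) = 2 * \<i> * (of_real hX * q (t2 N w2 PY PZ) + of_real hX * q (t2 N w2 PZ PY) - of_real hZ * q (t2 N w2 PX PY) - of_real hZ * q (t2 N w2 PY PX))"
    using assms(1)
    apply (simp only: window_sum)
    apply (simp only: Fj_def t_wn smul_wn sph_wn)
    apply (simp add: wn_t wn_far N6 algebra_simps)
    done
  then show ?thesis using assms(2) by simp
qed

lemma we_IXY:
  assumes "loc N q" "\<forall>u. (\<Sum>i<N. Fj N JX JY hX hY hZ q u i) = 0"
  shows "of_real JX * q (t1 w3 PZ) - of_real JY * q (t1 w2 PZ) + of_real hX * q (t2 N w2 PX PZ) - of_real hY * q (t2 N w2 PZ PY) - of_real hZ * q (t2 N w2 PX PX) + of_real hZ * q (t2 N w2 PY PY) = 0"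
proof -
  have "(\<Sum>i<N. Fj N JX JY hX hY hZ q (wn PI PI PX PY PI) i) = 2 * \<i> * (of_real JX * q (t1 w3 PZ) - of_real JY * q (t1 w2 PZ) + of_real hX * q (t2 N w2 PX PZ) - of_real hY * q (t2 N w2 PZ PY) - of_real hZ * q (t2 N w2 PX PX) + of_real hZ * q (t2 N w2 PY PY))"
    using assms(1)
    apply (simp only: window_sum)
    apply (simp only: Fj_def t_wn smul_wn sph_wn)
    apply (simp add: wn_t wn_far N6 algebra_simps)
    done
  then show ?thesis using assms(2) by simp
qed

lemma we_IYX:
  assumes "loc N q" "\<forall>u. (\<Sum>i<N. Fj N JX JY hX hY hZ q u i) = 0"
  shows "of_real JX * q (t1 w2 PZ) - of_real JY * q (t1 w3 PZ) + of_real hX * q (t2 N w2 PZ PX) - of_real hY * q (t2 N w2 PY PZ) - of_real hZ * q (t2 N w2 PX PX) + of_real hZ * q (t2 N w2 PY PY) = 0"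
proof -
  have "(\<Sum>i<N. Fj N JX JY hX hY hZ q (wn PI PI PY PX PI) i) = 2 * \<i> * (of_real JX * q (t1 w2 PZ) - of_real JY * q (t1 w3 PZ) + of_real hX * q (t2 N w2 PZ PX) - of_real hY * q (t2 N w2 PY PZ) - of_real hZ * q (t2 N w2 PX PX) + of_real hZ * q (t2 N w2 PY PY))"
    using assms(1)
    apply (simp only: window_sum)
    apply (simp only: Fj_def t_wn smul_wn sph_wn)
    apply (simp add: wn_t wn_far N6 algebra_simps)
    done
  then show ?thesis using assms(2) by simp
qed

lemma we_IXZ:
  assumes "loc N q" "\<forall>u. (\<Sum>i<N. Fj N JX JY hX hY hZ q u i) = 0"
  shows "- of_real JX * q (t1 w3 PY) - of_real hX * q (t2 N w2 PX PY) + of_real hY * q (t2 N w2 PX PX) - of_real hY * q (t2 N w2 PZ PZ) + of_real hZ * q (t2 N w2 PY PZ) = 0"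
proof -
  have "(\<Sum>i<N. Fj N JX JY hX hY hZ q (wn PI PI PX PZ PI) i) = 2 * \<i> * (- of_real JX * q (t1 w3 PY) - of_real hX * q (t2 N w2 PX PY) + of_real hY * q (t2 N w2 PX PX) - of_real hY * q (t2 N w2 PZ PZ) + of_real hZ * q (t2 N w2 PY PZ))"
    using assms(1)
    apply (simp only: window_sum)
    apply (simp only: Fj_def t_wn smul_wn sph_wn)
    apply (simp add: wn_t wn_far N6 algebra_simps)
    done
  then show ?thesis using assms(2) by simp
qed

lemma we_IZX:
  assumes "loc N q" "\<forall>u. (\<Sum>i<N. Fj N JX JY hX hY hZ q u i) = 0"
  shows "- of_real JX * q (t1 w2 PY) - of_real hX * q (t2 N w2 PY PX) + of_real hY * q (t2 N w2 PX PX) - of_real hY * q (t2 N w2 PZ PZ) + of_real hZ * q (t2 N w2 PZ PY) = 0"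
proof -
  have "(\<Sum>i<N. Fj N JX JY hX hY hZ q (wn PI PI PZ PX PI) i) = 2 * \<i> * (- of_real JX * q (t1 w2 PY) - of_real hX * q (t2 N w2 PY PX) + of_real hY * q (t2 N w2 PX PX) - of_real hY * q (t2 N w2 PZ PZ) + of_real hZ * q (t2 N w2 PZ PY))"
    using assms(1)
    apply (simp only: window_sum)
    apply (simp only: Fj_def t_wn smul_wn sph_wn)
    apply (simp add: wn_t wn_far N6 algebra_simps)
    done
  then show ?thesis using assms(2) by simp
qed

lemma we_IYZ:
  assumes "loc N q" "\<forall>u. (\<Sum>i<N. Fj N JX JY hX hY hZ q u i) = 0"
  shows "of_real JY * q (t1 w3 PX) - of_real hX * q (t2 N w2 PY PY) + of_real hX * q (t2 N w2 PZ PZ) + of_real hY * q (t2 N w2 PY PX) - of_real hZ * q (t2 N w2 PX PZ) = 0"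
proof -
  have "(\<Sum>i<N. Fj N JX JY hX hY hZ q (wn PI PI PY PZ PI) i) = 2 * \<i> * (of_real JY * q (t1 w3 PX) - of_real hX * q (t2 N w2 PY PY) + of_real hX * q (t2 N w2 PZ PZ) + of_real hY * q (t2 N w2 PY PX) - of_real hZ * q (t2 N w2 PX PZ))"
    using assms(1)
    apply (simp only: window_sum)
    apply (simp only: Fj_def t_wn smul_wn sph_wn)
    apply (simp add: wn_t wn_far N6 algebra_simps)
    done
  then show ?thesis using assms(2) by simp
qed

lemma we_IZY:
  assumes "loc N q" "\<forall>u. (\<Sum>i<N. Fj N JX JY hX hY hZ q u i) = 0"
  shows "of_real JY * q (t1 w2 PX) - of_real hX * q (t2 N w2 PY PY) + of_real hX * q (t2 N w2 PZ PZ) + of_real hY * q (t2 N w2 PX PY) - of_real hZ * q (t2 N w2 PZ PX) = 0"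
proof -
  have "(\<Sum>i<N. Fj N JX JY hX hY hZ q (wn PI PI PZ PY PI) i) = 2 * \<i> * (of_real JY * q (t1 w2 PX) - of_real hX * q (t2 N w2 PY PY) + of_real hX * q (t2 N w2 PZ PZ) + of_real hY * q (t2 N w2 PX PY) - of_real hZ * q (t2 N w2 PZ PX))"
    using assms(1)
    apply (simp only: window_sum)
    apply (simp only: Fj_def t_wn smul_wn sph_wn)
    apply (simp add: wn_t wn_far N6 algebra_simps)
    done
  then show ?thesis using assms(2) by simp
qed

lemma we_IIX:
  assumes "loc N q" "\<forall>u. (\<Sum>i<N. Fj N JX JY hX hY hZ q u i) = 0"
  shows "- of_real JY * q (t2 N w2 PY PZ) - of_real JY * q (t2 N w3 PZ PY) - of_real hY * q (t1 w3 PZ) + of_real hZ * q (t1 w3 PY) = 0"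
proof -
  have "(\<Sum>i<N. Fj N JX JY hX hY hZ q (wn PI PI PI PX PI) i) = 2 * \<i> * (- of_real JY * q (t2 N w2 PY PZ) - of_real JY * q (t2 N w3 PZ PY) - of_real hY * q (t1 w3 PZ) + of_real hZ * q (t1 w3 PY))"
    using assms(1)
    apply (simp only: window_sum)
    apply (simp only: Fj_def t_wn smul_wn sph_wn)
    apply (simp add: wn_t wn_far N6 algebra_simps)
    done
  then show ?thesis using assms(2) by simp
qed

lemma we_IIY:
  assumes "loc N q" "\<forall>u. (\<Sum>i<N. Fj N JX JY hX hY hZ q u i) = 0"
  shows "of_real JX * q (t2 N w2 PX PZ) + of_real JX * q (t2 N w3 PZ PX) + of_real hX * q (t1 w3 PZ) - of_real hZ * q (t1 w3 PX) = 0"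
proof -
  have "(\<Sum>i<N. Fj N JX JY hX hY hZ q (wn PI PI PI PY PI) i) = 2 * \<i> * (of_real JX * q (t2 N w2 PX PZ) + of_real JX * q (t2 N w3 PZ PX) + of_real hX * q (t1 w3 PZ) - of_real hZ * q (t1 w3 PX))"
    using assms(1)
    apply (simp only: window_sum)
    apply (simp only: Fj_def t_wn smul_wn sph_wn)
    apply (simp add: wn_t wn_far N6 algebra_simps)
    done
  then show ?thesis using assms(2) by simp
qed

lemma we_IIZ:
  assumes "loc N q" "\<forall>u. (\<Sum>i<N. Fj N JX JY hX hY hZ q u i) = 0"
  shows "- of_real JX * q (t2 N w2 PX PY) - of_real JX * q (t2 N w3 PY PX) + of_real JY * q (t2 N w2 PY PX) + of_real JY * q (t2 N w3 PX PY) - of_real hX * q (t1 w3 PY) + of_real hY * q (t1 w3 PX) = 0"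
proof -
  have "(\<Sum>i<N. Fj N JX JY hX hY hZ q (wn PI PI PI PZ PI) i) = 2 * \<i> * (- of_real JX * q (t2 N w2 PX PY) - of_real JX * q (t2 N w3 PY PX) + of_real JY * q (t2 N w2 PY PX) + of_real JY * q (t2 N w3 PX PY) - of_real hX * q (t1 w3 PY) + of_real hY * q (t1 w3 PX))"
    using assms(1)
    apply (simp only: window_sum)
    apply (simp only: Fj_def t_wn smul_wn sph_wn)
    apply (simp add: wn_t wn_far N6 algebra_simps)
    done
  then show ?thesis using assms(2) by simp
qed
end

lemma pred_ex: "j < N \<Longrightarrow> \<exists>p<N. Suc p mod N = j"
proof -
  assume j: "j < N"
  show ?thesis
  proof (cases j)
    case 0
    then show ?thesis using j by (intro exI[of _ "N - 1"]) auto
  next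
    case (Suc k)
    then show ?thesis using j by (intro exI[of _ k]) auto
  qed
qed

lemma ring_eqs:
  fixes q :: "(nat \<Rightarrow> pauli) \<Rightarrow> complex" and n :: "nat \<Rightarrow> nat"
  assumes N6: "6 \<le> N" and L: "loc N q" and H: "\<forall>u. (\<Sum>i<N. Fj N JX JY hX hY hZ q u i) = 0"
    and n: "\<And>i. n i = Suc i mod N" and j: "j < N"
  shows "- of_real JY * q (t2 N j PX PZ) = 0"
    "of_real JX * q (t2 N j PY PZ) = 0"
    "- of_real JY * q (t2 N j PZ PZ) = 0"
    "- of_real JX * q (t2 N j PZ PY) = 0"
    "of_real JY * q (t2 N j PZ PX) = 0"
    "- of_real JX * q (t2 N j PX PY) - of_real JX * q (t2 N (n j) PY PX) = 0"
    "of_real JY * q (t2 N j PY PX) + of_real JY * q (t2 N (n j) PX PY) = 0"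
    "- of_real JX * q (t2 N (n j) PY PY) + of_real JY * q (t2 N j PX PX) = 0"
    "- of_real JX * q (t2 N j PY PY) + of_real JY * q (t2 N (n j) PX PX) = 0"
    "- of_real hY * q (t2 N (n j) PX PZ) - of_real hY * q (t2 N (n j) PZ PX) + of_real hZ * q (t2 N (n j) PX PY) + of_real hZ * q (t2 N (n j) PY PX) = 0"
    "of_real hX * q (t2 N (n j) PY PZ) + of_real hX * q (t2 N (n j) PZ PY) - of_real hZ * q (t2 N (n j) PX PY) - of_real hZ * q (t2 N (n j) PY PX) = 0"
    "of_real JX * q (t1 (n (n j)) PZ) - of_real JY * q (t1 (n j) PZ) + of_real hX * q (t2 N (n j) PX PZ) - of_real hY * q (t2 N (n j) PZ PY) - of_real hZ * q (t2 N (n j) PX PX) + of_real hZ * q (t2 N (n j) PY PY) = 0"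
    "of_real JX * q (t1 (n j) PZ) - of_real JY * q (t1 (n (n j)) PZ) + of_real hX * q (t2 N (n j) PZ PX) - of_real hY * q (t2 N (n j) PY PZ) - of_real hZ * q (t2 N (n j) PX PX) + of_real hZ * q (t2 N (n j) PY PY) = 0"
    "- of_real JX * q (t1 (n (n j)) PY) - of_real hX * q (t2 N (n j) PX PY) + of_real hY * q (t2 N (n j) PX PX) - of_real hY * q (t2 N (n j) PZ PZ) + of_real hZ * q (t2 N (n j) PY PZ) = 0"
    "- of_real JX * q (t1 (n j) PY) - of_real hX * q (t2 N (n j) PY PX) + of_real hY * q (t2 N (n j) PX PX) - of_real hY * q (t2 N (n j) PZ PZ) + of_real hZ * q (t2 N (n j) PZ PY) = 0"
    "of_real JY * q (t1 (n (n j)) PX) - of_real hX * q (t2 N (n j) PY PY) + of_real hX * q (t2 N (n j) PZ PZ) + of_real hY * q (t2 N (n j) PY PX) - of_real hZ * q (t2 N (n j) PX PZ) = 0"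
    "of_real JY * q (t1 (n j) PX) - of_real hX * q (t2 N (n j) PY PY) + of_real hX * q (t2 N (n j) PZ PZ) + of_real hY * q (t2 N (n j) PX PY) - of_real hZ * q (t2 N (n j) PZ PX) = 0"
    "- of_real JY * q (t2 N (n j) PY PZ) - of_real JY * q (t2 N (n (n j)) PZ PY) - of_real hY * q (t1 (n (n j)) PZ) + of_real hZ * q (t1 (n (n j)) PY) = 0"
    "of_real JX * q (t2 N (n j) PX PZ) + of_real JX * q (t2 N (n (n j)) PZ PX) + of_real hX * q (t1 (n (n j)) PZ) - of_real hZ * q (t1 (n (n j)) PX) = 0"
    "- of_real JX * q (t2 N (n j) PX PY) - of_real JX * q (t2 N (n (n j)) PY PX) + of_real JY * q (t2 N (n j) PY PX) + of_real JY * q (t2 N (n (n j)) PX PY) - of_real hX * q (t1 (n (n j)) PY) + of_real hY * q (t1 (n (n j)) PX) = 0"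
proof -
  obtain p where p: "p < N" "Suc p mod N = j" using pred_ex[OF j] by blast
  interpret W: wind N p using N6 p by unfold_locales auto
  have w1: "W.w1 = j" using p(2) unfolding W.w1_def .
  have w2: "W.w2 = n j" by (simp only: W.w2_def w1 n)
  have w3: "W.w3 = n (n j)" by (simp only: W.w3_def w2 n)
  note w = w1 w2 w3
  show "- of_real JY * q (t2 N j PX PZ) = 0" "of_real JX * q (t2 N j PY PZ) = 0" "- of_real JY * q (t2 N j PZ PZ) = 0" "- of_real JX * q (t2 N j PZ PY) = 0" "of_real JY * q (t2 N j PZ PX) = 0" "- of_real JX * q (t2 N j PX PY) - of_real JX * q (t2 N (n j) PY PX) = 0" "of_real JY * q (t2 N j PY PX) + of_real JY * q (t2 N (n j) PX PY) = 0" "- of_real JX * q (t2 N (n j) PY PY) + of_real JY * q (t2 N j PX PX) = 0" "- of_real JX * q (t2 N j PY PY) + of_real JY * q (t2 N (n j) PX PX) = 0" "- of_real hY * q (t2 N (n j) PX PZ) - of_real hY * q (t2 N (n j) PZ PX) + of_real hZ * q (t2 N (n j) PX PY) + of_real hZ * q (t2 N (n j) PY PX) = 0" "of_real hX * q (t2 N (n j) PY PZ) + of_real hX * q (t2 N (n j) PZ PY) - of_real hZ * q (t2 N (n j) PX PY) - of_real hZ * q (t2 N (n j) PY PX) = 0" "of_real JX * q (t1 (n (n j)) PZ) - of_real JY * q (t1 (n j) PZ) + of_real hX * q (t2 N (n j) PX PZ) - of_real hY * q (t2 N (n j) PZ PY) - of_real hZ * q (t2 N (n j) PX PX) + of_real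 hZ * q (t2 N (n j) PY PY) = 0" "of_real JX * q (t1 (n j) PZ) - of_real JY * q (t1 (n (n j)) PZ) + of_real hX * q (t2 N (n j) PZ PX) - of_real hY * q (t2 N (n j) PY PZ) - of_real hZ * q (t2 N (n j) PX PX) + of_real hZ * q (t2 N (n j) PY PY) = 0" "- of_real JX * q (t1 (n (n j)) PY) - of_real hX * q (t2 N (n j) PX PY) + of_real hY * q (t2 N (n j) PX PX) - of_real hY * q (t2 N (n j) PZ PZ) + of_real hZ * q (t2 N (n j) PY PZ) = 0" "- of_real JX * q (t1 (n j) PY) - of_real hX * q (t2 N (n j) PY PX) + of_real hY * q (t2 N (n j) PX PX) - of_real hY * q (t2 N (n j) PZ PZ) + of_real hZ * q (t2 N (n j) PZ PY) = 0" "of_real JY * q (t1 (n (n j)) PX) - of_real hX * q (t2 N (n j) PY PY) + of_real hX * q (t2 N (n j) PZ PZ) + of_real hY * q (t2 N (n j) PY PX) - of_real hZ * q (t2 N (n j) PX PZ) = 0" "of_real JY * q (t1 (n j) PX) - of_real hX * q (t2 N (n j) PY PY) + of_real hX * q (t2 N (n j) PZ PZ) + of_real hY * q (t2 N (n j) PX PY) - of_real hZ * q (t2 N (n j) PZ PX) = 0" "- of_real JY * q (t2 N (n j) PY PZ) - of_real JY * q (t2 N (n (n j)) PZ PY) - of_real hY * q (t1 (n (n j)) PZ) + of_real hZ * q (t1 (n (n j)) PY) = 0" "of_real JX * q (t2 N (n j) PX PZ) + of_real JX * q (t2 N (n (n j)) PZ PX) + of_real hX * q (t1 (n (n j)) PZ)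 - of_real hZ * q (t1 (n (n j)) PX) = 0" "- of_real JX * q (t2 N (n j) PX PY) - of_real JX * q (t2 N (n (n j)) PY PX) + of_real JY * q (t2 N (n j) PY PX) + of_real JY * q (t2 N (n (n j)) PX PY) - of_real hX * q (t1 (n (n j)) PY) + of_real hY * q (t1 (n (n j)) PX) = 0"
    apply (insert W.we_XXY[OF L H] W.we_YYX[OF L H] W.we_ZXY[OF L H] W.we_ZZX[OF L H] W.we_ZZY[OF L H] W.we_XZX[OF L H] W.we_YZY[OF L H] W.we_XZY[OF L H] W.we_YZX[OF L H] W.we_IXX[OF L H] W.we_IYY[OF L H] W.we_IXY[OF L H] W.we_IYX[OF L H] W.we_IXZ[OF L H] W.we_IZX[OF L H] W.we_IYZ[OF L H] W.we_IZY[OF L H] W.we_IIX[OF L H] W.we_IIY[OF L H] W.we_IIZ[OF L H])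
    apply (unfold w)
    apply assumption+
    done
qed

definition special :: "nat \<Rightarrow> real \<Rightarrow> real \<Rightarrow> real \<Rightarrow> real \<Rightarrow> real \<Rightarrow> bool" where
  "special N JX JY hX hY hZ \<longleftrightarrow> (even N \<and> hZ = 0 \<and> hX \<noteq> 0 \<and> hY \<noteq> 0 \<and> JY = - JX * (hY / hX) ^ 2)"

lemma sgn_alt: "((-1::complex) ^ (i + 1)) = (if even i then -1 else 1)"
  by (simp add: power_add)

lemma coef_structure:
  fixes q :: "(nat \<Rightarrow> pauli) \<Rightarrow> complex"
  assumes N6: "6 \<le> N" and L: "loc N q" and H: "\<forall>u. (\<Sum>i<N. Fj N JX JY hX hY hZ q u i) = 0"
    and JX0: "JX \<noteq> 0" and JY0: "JY \<noteq> 0" and hh: "(hX, hY) \<noteq> (0, 0)"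
  shows "\<exists>\<beta> \<gamma>. (\<not> special N JX JY hX hY hZ \<longrightarrow> \<gamma> = 0) \<and> (\<forall>i<N.
     q (t2 N i PX PX) = \<beta> * of_real JX + \<gamma> * (-1)^(i+1) * of_real hX ^ 2 \<and>
     q (t2 N i PY PY) = \<beta> * of_real JY + \<gamma> * (-1)^(i+1) * of_real hY ^ 2 \<and>
     q (t2 N i PX PY) = \<gamma> * (-1)^(i+1) * of_real hX * of_real hY \<and>
     q (t2 N i PY PX) = \<gamma> * (-1)^(i+1) * of_real hX * of_real hY \<and>
     q (t2 N i PX PZ) = 0 \<and> q (t2 N i PY PZ) = 0 \<and> q (t2 N i PZ PZ) = 0 \<and>
     q (t2 N i PZ PX) = 0 \<and> q (t2 N i PZ PY) = 0 \<and>
     q (t1 i PX) = \<beta> * of_real hX \<and> q (t1 i PY) = \<beta> * of_real hY \<and> q (t1 i PZ) = \<beta> * of_real hZ)"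
proof -
  define n where "n = (\<lambda>i. Suc i mod N)"
  have n: "\<And>i. n i = Suc i mod N" by (simp add: n_def)
  have nlt: "\<And>i. i < N \<Longrightarrow> n i < N" using N6 by (simp add: n)
  have surj: "\<And>i. i < N \<Longrightarrow> \<exists>j<N. n j = i" using pred_ex n by metis
  note E = ring_eqs[OF N6 L H n]
  define jx where "jx = complex_of_real JX"
  define jy where "jy = complex_of_real JY"
  define hx where "hx = complex_of_real hX"
  define hy where "hy = complex_of_real hY"
  define hz where "hz = complex_of_real hZ"
  have jx0: "jx \<noteq> 0" and jy0: "jy \<noteq> 0" using JX0 JY0 by (simp_all add: jx_def jy_def)
  have hh': "hx \<noteq> 0 \<or> hy \<noteq> 0" using hh by (auto simp: hx_def hy_def)
  define x where "x = (\<lambda>i. q (t2 N i PX PX))"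
  define y where "y = (\<lambda>i. q (t2 N i PY PY))"
  define u where "u = (\<lambda>i. q (t2 N i PX PY))"
  define v where "v = (\<lambda>i. q (t2 N i PY PX))"
  define ax where "ax = (\<lambda>i. q (t1 i PX))"
  define ay where "ay = (\<lambda>i. q (t1 i PY))"
  define az where "az = (\<lambda>i. q (t1 i PZ))"
  have pd: "\<And>i. q (t2 N i PX PX) = x i" "\<And>i. q (t2 N i PY PY) = y i" "\<And>i. q (t2 N i PX PY) = u i"
    "\<And>i. q (t2 N i PY PX) = v i" "\<And>i. q (t1 i PX) = ax i" "\<And>i. q (t1 i PY) = ay i" "\<And>i. q (t1 i PZ) = az i"
    by (simp_all add: x_def y_def u_def v_def ax_def ay_def az_def)
  note defs = jx_def[symmetric] jy_def[symmetric] hx_def[symmetric] hy_def[symmetric] hz_def[symmetric] pd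
  have Z: "q (t2 N i PX PZ) = 0 \<and> q (t2 N i PY PZ) = 0 \<and> q (t2 N i PZ PZ) = 0 \<and>
     q (t2 N i PZ PX) = 0 \<and> q (t2 N i PZ PY) = 0" if "i < N" for i
    using E[OF that] JX0 JY0 by simp
  have F2a: "u i + v (n i) = 0" if "i < N" for i
  proof -
    have "- jx * u i - jx * v (n i) = 0" using E(6)[OF that] unfolding defs .
    then have "jx * (u i + v (n i)) = 0" by algebra
    then show ?thesis using jx0 by simp
  qed
  have F2b: "v i + u (n i) = 0" if "i < N" for i
  proof -
    have "jy * v i + jy * u (n i) = 0" using E(7)[OF that] unfolding defs .
    then have "jy * (v i + u (n i)) = 0" by algebra
    then show ?thesis using jy0 by simp
  qed
  have F3a: "jy * x i = jx * y (n i)" if "i < N" for i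
    using E(8)[OF that] unfolding defs by algebra
  have F3b: "jy * x (n i) = jx * y i" if "i < N" for i
    using E(9)[OF that] unfolding defs by algebra
  have S2: "hz * (u i + v i) = 0 \<and> jx * ay (n i) = hy * x i - hx * u i \<and> jx * ay i = hy * x i - hx * v i
     \<and> jy * ax (n i) = hx * y i - hy * v i \<and> jy * ax i = hx * y i - hy * u i" if iN: "i < N" for i
  proof -
    obtain j where j: "j < N" "n j = i" using surj[OF iN] by blast
    have "j < N" by fact
    note e = E[OF this, unfolded j(2)]
    have z: "q (t2 N i PX PZ) = 0 \<and> q (t2 N i PY PZ) = 0 \<and> q (t2 N i PZ PZ) = 0 \<and>
     q (t2 N i PZ PX) = 0 \<and> q (t2 N i PZ PY) = 0" using Z iN by blast
    show ?thesis using e(10) e(14) e(15) e(16) e(17) z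
      by (simp add: defs algebra_simps)
  qed
  have S1: "hy * az i = hz * ay i \<and> hx * az i = hz * ax i \<and> hx * ay i = hy * ax i" if iN: "i < N" for i
  proof -
    obtain k where k: "k < N" "n k = i" using surj[OF iN] by blast
    obtain j where j: "j < N" "n j = k" using surj[OF k(1)] by blast
    have "j < N" by fact
    note e = E[OF this, unfolded j(2) k(2)]
    have z: "q (t2 N k PX PZ) = 0 \<and> q (t2 N k PY PZ) = 0 \<and> q (t2 N k PZ PY) = 0 \<and> q (t2 N i PZ PY) = 0 \<and> q (t2 N i PZ PX) = 0"
      using Z iN k by blast
    have "u k = - v i" "v k = - u i" using F2a[OF k(1)] F2b[OF k(1)] k(2) by (simp_all add: algebra_simps eq_neg_iff_add_eq_0)
    then show ?thesis using e(18) e(19) e(20) z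
      by (simp add: defs algebra_simps)
  qed
  have R1: "x (n (n i)) = x i" if iN: "i < N" for i
  proof -
    have "jy * x (n (n i)) = jy * x i" using F3a[OF iN] F3b[OF nlt[OF iN]] by simp
    then show ?thesis using jy0 by simp
  qed
  have E1: "2 * hx * u i = hy * (x i - x (n i))" if iN: "i < N" for i
    using S2[OF iN] S2[OF nlt[OF iN]] F2a[OF iN] by algebra
  have E1': "2 * hx * v i = hy * (x i - x (n i))" if iN: "i < N" for i
    using E1[OF nlt[OF iN]] F2b[OF iN] R1[OF iN] by algebra
  have E2: "2 * hy * jx * v i = - hx * jy * (x i - x (n i))" if iN: "i < N" for i
    using S2[OF iN] S2[OF nlt[OF iN]] F2b[OF iN] F3a[OF iN] F3b[OF iN] by algebra
  have E2': "2 * hy * jx * u i = - hx * jy * (x i - x (n i))" if iN: "i < N" for i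
    using E2[OF nlt[OF iN]] F2a[OF iN] R1[OF iN] by algebra
  have n0: "n 0 = 1" using N6 by (simp add: n)
  have nlast: "n (N - 1) = 0" using N6 by (simp add: n)
  have nsuc: "Suc i < N \<Longrightarrow> n i = Suc i" for i by (simp add: n)
  have par: "x i = (if even i then x 0 else x 1)" if "i < N" for i
    using that
  proof (induction i rule: less_induct)
    case (less i)
    show ?case
    proof (cases "i < 2")
      case True
      then show ?thesis by (cases i) auto
    next
      case False
      then obtain m where m: "i = Suc (Suc m)" by (metis add_2_eq_Suc le_add_diff_inverse not_less)
      have mN: "m < N" using less.prems m by simp
      have "n m = Suc m" "n (Suc m) = Suc (Suc m)" using less.prems m by (simp_all add: nsuc)
      then have "x i = x m" using R1[OF mN] m by simp
      moreover have "x m = (if even m then x 0 else x 1)" using less.IH[of m] m mN by simp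
      ultimately show ?thesis using m by simp
    qed
  qed
  define K where "K = jx * hy^2 + jy * hx^2"
  have Kspec: "special N JX JY hX hY hZ \<longleftrightarrow> even N \<and> hZ = 0 \<and> hX \<noteq> 0 \<and> hY \<noteq> 0 \<and> K = 0"
  proof -
    have "hX \<noteq> 0 \<Longrightarrow> (JY = - JX * (hY / hX) ^ 2) \<longleftrightarrow> (JX * hY^2 + JY * hX^2 = 0)"
      by (auto simp: field_simps power2_eq_square)
    moreover have "K = of_real (JX * hY^2 + JY * hX^2)"
      by (simp add: K_def jx_def jy_def hx_def hy_def)
    ultimately show ?thesis unfolding special_def by (auto simp del: of_real_add)
  qed
  have K0: "K = 0 \<Longrightarrow> hx \<noteq> 0 \<and> hy \<noteq> 0"
    using hh' jx0 jy0 by (auto simp: K_def)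
  have nonspec: "x 1 = x 0" if ns: "\<not> special N JX JY hX hY hZ"
  proof -
    have u0: "2 * hx * u 0 = hy * (x 0 - x 1)" using E1[of 0] N6 n0 by simp
    have v0: "2 * hx * v 0 = hy * (x 0 - x 1)" using E1'[of 0] N6 n0 by simp
    have u0': "2 * hy * jx * u 0 = - hx * jy * (x 0 - x 1)" using E2'[of 0] N6 n0 by simp
    have kd: "K * (x 0 - x 1) = 0" unfolding K_def using u0 u0' by algebra
    consider "K \<noteq> 0" | "K = 0" "hZ \<noteq> 0" | "K = 0" "odd N"
      using ns Kspec K0 hx_def hy_def by fastforce
    then show ?thesis
    proof cases
      case 1 then show ?thesis using kd by simp
    next
      case 2
      then have hx0: "hx \<noteq> 0" and hz0: "hz \<noteq> 0" using K0 by (auto simp: hz_def)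
      have "u 0 + v 0 = 0" using S2[of 0] N6 hz0 by simp
      moreover have "u 0 = v 0"
      proof -
        have "(2 * hx) * u 0 = (2 * hx) * v 0" using u0 v0 by simp
        then show ?thesis using hx0 by simp
      qed
      ultimately have "u 0 = 0" by simp
      then have "hy * (x 0 - x 1) = 0" using u0 by simp
      then show ?thesis using K0[OF 2(1)] by simp
    next
      case 3
      have "x (N - 1) = x 0" using par[of "N - 1"] N6 3(2) by simp
      moreover have "x (n (n (N - 1))) = x (N - 1)" using R1[of "N - 1"] N6 by simp
      ultimately show ?thesis using nlast n0 by simp
    qed
  qed
  define \<gamma> where "\<gamma> = (if special N JX JY hX hY hZ then (x 1 - x 0) / (2 * hx^2) else 0)"
  define \<beta> where "\<beta> = (x 0 + x 1) / (2 * jx)"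
  define s where "s = (\<lambda>i::nat. if even i then (-1::complex) else 1)"
  have sgn_s: "\<And>i. (-1::complex)^(i+1) = s i" by (simp add: s_def sgn_alt)
  have sgn_s2: "\<And>i. (-1::complex)^i = - s i" by (simp add: s_def)
  have gK: "\<gamma> * K = 0" using Kspec by (auto simp: \<gamma>_def)
  have xf: "x i = \<beta> * jx + \<gamma> * s i * hx^2" if iN: "i < N" for i
  proof (cases "special N JX JY hX hY hZ")
    case True
    then have hx0: "hx \<noteq> 0" using Kspec K0 by auto
    show ?thesis using par[OF iN] True hx0 jx0 by (auto simp: \<gamma>_def \<beta>_def s_def field_simps)
  next
    case False
    show ?thesis using par[OF iN] nonspec[OF False] jx0 False by (simp add: \<gamma>_def \<beta>_def field_simps)
  qed
  have xnf: "x (n i) = \<beta> * jx - \<gamma> * s i * hx^2" if iN: "i < N" for i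
  proof (cases "special N JX JY hX hY hZ")
    case True
    have ev: "even N" using True Kspec by simp
    have "s (n i) = - s i"
    proof (cases "Suc i < N")
      case True then show ?thesis by (simp add: nsuc s_def)
    next
      case False
      then have si: "Suc i = N" using iN by simp
      then have "i = N - 1" "n i = 0" by (simp_all add: n)
      then show ?thesis using ev N6 by (simp add: s_def)
    qed
    then show ?thesis using xf[OF nlt[OF iN]] by simp
  next
    case False
    then show ?thesis using xf[OF nlt[OF iN]] by (simp add: \<gamma>_def)
  qed
  have dx: "x i - x (n i) = 2 * \<gamma> * s i * hx^2" if iN: "i < N" for i
    using xf[OF iN] xnf[OF iN] by algebra
  have uf: "u i = \<gamma> * s i * hx * hy" if iN: "i < N" for i
  proof -
    have a: "hx * (u i - \<gamma> * s i * hx * hy) = 0" using E1[OF iN] dx[OF iN] by algebra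
    have "jx * (hy * (u i - \<gamma> * s i * hx * hy)) = 0" using E2'[OF iN] dx[OF iN] gK unfolding K_def by algebra
    then have b: "hy * (u i - \<gamma> * s i * hx * hy) = 0" using jx0 by simp
    from a b hh' show ?thesis by auto
  qed
  have vf: "v i = \<gamma> * s i * hx * hy" if iN: "i < N" for i
  proof -
    have a: "hx * (v i - \<gamma> * s i * hx * hy) = 0" using E1'[OF iN] dx[OF iN] by algebra
    have "jx * (hy * (v i - \<gamma> * s i * hx * hy)) = 0" using E2[OF iN] dx[OF iN] gK unfolding K_def by algebra
    then have b: "hy * (v i - \<gamma> * s i * hx * hy) = 0" using jx0 by simp
    from a b hh' show ?thesis by auto
  qed
  have yf: "y i = \<beta> * jy + \<gamma> * s i * hy^2" if iN: "i < N" for i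
  proof -
    have "jx * y i = jx * (\<beta> * jy + \<gamma> * s i * hy^2)" using F3b[OF iN] xnf[OF iN] gK unfolding K_def by algebra
    then show ?thesis using jx0 by simp
  qed
  have ayf: "ay i = \<beta> * hy" if iN: "i < N" for i
  proof -
    have "jx * ay i = jx * (\<beta> * hy)" using S2[OF iN] xf[OF iN] vf[OF iN] by algebra
    then show ?thesis using jx0 by simp
  qed
  have axf: "ax i = \<beta> * hx" if iN: "i < N" for i
  proof -
    have "jy * ax i = jy * (\<beta> * hx)" using S2[OF iN] yf[OF iN] uf[OF iN] by algebra
    then show ?thesis using jy0 by simp
  qed
  have azf: "az i = \<beta> * hz" if iN: "i < N" for i
  proof -
    have a: "hy * (az i - \<beta> * hz) = 0" using S1[OF iN] ayf[OF iN] by algebra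
    have b: "hx * (az i - \<beta> * hz) = 0" using S1[OF iN] axf[OF iN] by algebra
    from a b hh' show ?thesis by auto
  qed
  show ?thesis
    apply (rule exI[of _ \<beta>], rule exI[of _ \<gamma>])
    apply (intro conjI)
     apply (simp add: \<gamma>_def)
    apply (intro allI impI)
    subgoal for i using xf[of i] yf[of i] uf[of i] vf[of i] axf[of i] ayf[of i] azf[of i] Z[of i]
      by (simp add: defs sgn_s sgn_s2)
    done
qed

definition pspan :: "nat \<Rightarrow> op \<Rightarrow> bool" where
  "pspan N M \<longleftrightarrow> (\<exists>T d. finite T \<and> (\<forall>s\<in>T. canon N s) \<and> M = (\<lambda>a b. \<Sum>s\<in>T. d s * pstring N s a b))"

lemma pspan_gen:
  fixes g :: "'x \<Rightarrow> nat \<Rightarrow> pauli"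
  assumes "finite X" "\<forall>x\<in>X. canon N (g x)"
  shows "pspan N (\<lambda>a b. \<Sum>x\<in>X. d x * pstring N (g x) a b)"
proof -
  define d' where "d' = (\<lambda>w. \<Sum>x\<in>{x\<in>X. g x = w}. d x)"
  have "(\<lambda>a b. \<Sum>x\<in>X. d x * pstring N (g x) a b) = (\<lambda>a b. \<Sum>w\<in>g ` X. d' w * pstring N w a b)"
  proof (intro ext)
    fix a b
    have "(\<Sum>x\<in>X. d x * pstring N (g x) a b) = (\<Sum>w\<in>g ` X. \<Sum>x\<in>{x\<in>X. g x = w}. d x * pstring N (g x) a b)"
      by (rule sum.image_gen[OF assms(1)])
    also have "\<dots> = (\<Sum>w\<in>g ` X. d' w * pstring N w a b)"
      unfolding d'_def sum_distrib_right by (intro sum.cong refl) auto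
    finally show "(\<Sum>x\<in>X. d x * pstring N (g x) a b) = (\<Sum>w\<in>g ` X. d' w * pstring N w a b)" .
  qed
  then show ?thesis unfolding pspan_def using assms
    by (intro exI[of _ "g ` X"] exI[of _ d']) simp
qed

lemma canon_eq: assumes "canon N u" "canon N s" shows "(\<forall>i<N. u i = s i) \<longleftrightarrow> u = s"
proof
  assume h: "\<forall>i<N. u i = s i"
  show "u = s"
  proof
    fix i show "u i = s i" using h assms by (cases "i < N") (auto simp: canon_def)
  qed
qed simp

lemma pspan_zero:
  assumes "pspan N M" "\<forall>w. canon N w \<longrightarrow> coef N w M = 0"
  shows "M = (\<lambda>a b. 0)"
proof -
  obtain T d where T: "finite T" "\<forall>s\<in>T. canon N s" "M = (\<lambda>a b. \<Sum>s\<in>T. d s * pstring N s a b)"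
    using assms(1) unfolding pspan_def by blast
  have "d u = 0" if u: "u \<in> T" for u
  proof -
    have "coef N u M = (\<Sum>s\<in>T. d s * (if \<forall>i<N. u i = s i then 1 else 0))"
      unfolding T(3) by (rule coef_lincomb)
    also have "\<dots> = (\<Sum>s\<in>T. if s = u then d s else 0)"
      using T(2) u canon_eq[of N u] by (intro sum.cong refl) auto
    also have "\<dots> = d u" using T(1) u by simp
    finally show ?thesis using assms(2) T(2) u by simp
  qed
  then show ?thesis unfolding T(3) by simp
qed

lemma pspan_pstring: "canon N s \<Longrightarrow> pspan N (pstring N s)"
  unfolding pspan_def by (intro exI[of _ "{s}"] exI[of _ "\<lambda>_. 1"]) auto

lemma pspan_0: "pspan N (\<lambda>a b. 0)"
  unfolding pspan_def by (intro exI[of _ "{}"]) auto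

lemma pspan_add: assumes "pspan N A" "pspan N B" shows "pspan N (\<lambda>a b. A a b + B a b)"
proof -
  obtain T1 d1 where 1: "finite T1" "\<forall>s\<in>T1. canon N s" "A = (\<lambda>a b. \<Sum>s\<in>T1. d1 s * pstring N s a b)"
    using assms(1) unfolding pspan_def by blast
  obtain T2 d2 where 2: "finite T2" "\<forall>s\<in>T2. canon N s" "B = (\<lambda>a b. \<Sum>s\<in>T2. d2 s * pstring N s a b)"
    using assms(2) unfolding pspan_def by blast
  define g :: "(nat \<Rightarrow> pauli) + (nat \<Rightarrow> pauli) \<Rightarrow> nat \<Rightarrow> pauli"
    where "g = (\<lambda>x. case x of Inl s \<Rightarrow> s | Inr s \<Rightarrow> s)"
  define d :: "(nat \<Rightarrow> pauli) + (nat \<Rightarrow> pauli) \<Rightarrow> complex"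
    where "d = (\<lambda>x. case x of Inl s \<Rightarrow> d1 s | Inr s \<Rightarrow> d2 s)"
  have "(\<lambda>a b. A a b + B a b) = (\<lambda>a b. \<Sum>x\<in>T1 <+> T2. d x * pstring N (g x) a b)"
    unfolding 1(3) 2(3) using 1(1) 2(1) by (simp add: sum.Plus g_def d_def o_def)
  moreover have "pspan N (\<lambda>a b. \<Sum>x\<in>T1 <+> T2. d x * pstring N (g x) a b)"
    apply (rule pspan_gen)
    using 1(1,2) 2(1,2) by (auto simp: g_def)
  ultimately show ?thesis by simp
qed

lemma pspan_cmult: assumes "pspan N A" shows "pspan N (\<lambda>a b. c * A a b)"
proof -
  obtain T d where 1: "finite T" "\<forall>s\<in>T. canon N s" "A = (\<lambda>a b. \<Sum>s\<in>T. d s * pstring N s a b)"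
    using assms(1) unfolding pspan_def by blast
  have "(\<lambda>a b. c * A a b) = (\<lambda>a b. \<Sum>s\<in>T. (c * d s) * pstring N s a b)"
    unfolding 1(3) by (simp add: sum_distrib_left mult_ac)
  then show ?thesis unfolding pspan_def using 1(1,2)
    by (intro exI[of _ T] exI[of _ "\<lambda>s. c * d s"]) simp
qed

lemma pspan_diff: assumes "pspan N A" "pspan N B" shows "pspan N (\<lambda>a b. A a b - B a b)"
proof -
  have "pspan N (\<lambda>a b. A a b + (-1) * B a b)" by (intro pspan_add pspan_cmult assms)
  then show ?thesis by simp
qed

lemma pspan_sum: assumes "finite I" "\<forall>i\<in>I. pspan N (F i)" shows "pspan N (\<lambda>a b. \<Sum>i\<in>I. F i a b)"
  using assms
proof (induction I rule: finite_induct)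
  case empty
  then show ?case by (simp add: pspan_0)
next
  case (insert x F')
  have "pspan N (\<lambda>a b. F x a b + (\<Sum>i\<in>F'. F i a b))"
    using insert by (intro pspan_add) auto
  then show ?case using insert by simp
qed

lemma canon_smul: "canon N s \<Longrightarrow> canon N t \<Longrightarrow> canon N (smul s t)"
  by (simp add: canon_def smul_def)

lemma pspan_mmul: assumes "pspan N A" "pspan N B" shows "pspan N (mmul N A B)"
proof -
  obtain T1 d1 where 1: "finite T1" "\<forall>s\<in>T1. canon N s" "A = (\<lambda>a b. \<Sum>s\<in>T1. d1 s * pstring N s a b)"
    using assms(1) unfolding pspan_def by blast
  obtain T2 d2 where 2: "finite T2" "\<forall>s\<in>T2. canon N s" "B = (\<lambda>a b. \<Sum>s\<in>T2. d2 s * pstring N s a b)"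
    using assms(2) unfolding pspan_def by blast
  have "mmul N A B = (\<lambda>a b. \<Sum>s\<in>T1. \<Sum>t\<in>T2. (d1 s * d2 t * sph N s t) * pstring N (smul s t) a b)"
    unfolding 1(3) 2(3)
    by (simp add: mmul_sum_left mmul_sum_right mmul_cmult_left mmul_cmult_right mmul_pstring sum_distrib_left mult_ac)
  also have "\<dots> = (\<lambda>a b. \<Sum>x\<in>T1 \<times> T2. (d1 (fst x) * d2 (snd x) * sph N (fst x) (snd x)) * pstring N (smul (fst x) (snd x)) a b)"
    by (simp add: sum.cartesian_product split_def)
  finally have eq: "mmul N A B = (\<lambda>a b. \<Sum>x\<in>T1 \<times> T2. (d1 (fst x) * d2 (snd x) * sph N (fst x) (snd x)) * pstring N (smul (fst x) (snd x)) a b)" .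
  have "pspan N (\<lambda>a b. \<Sum>x\<in>T1 \<times> T2. (d1 (fst x) * d2 (snd x) * sph N (fst x) (snd x)) * pstring N (smul (fst x) (snd x)) a b)"
    apply (rule pspan_gen[where g="\<lambda>x. smul (fst x) (snd x)" and d="\<lambda>x. d1 (fst x) * d2 (snd x) * sph N (fst x) (snd x)"])
    using 1(1) 2(1) apply simp
  proof (intro ballI)
    fix x assume "x \<in> T1 \<times> T2"
    then have "fst x \<in> T1" "snd x \<in> T2" by auto
    then show "canon N (smul (fst x) (snd x))" using 1(2) 2(2) canon_smul by blast
  qed
  then show ?thesis using eq by simp
qed

lemma form2_cases:
  assumes "canon N w" "form2 N w" "1 < N"
  shows "w = (\<lambda>_. PI) \<or> (\<exists>i<N. \<exists>A. A \<noteq> PI \<and> w = t1 i A) \<or> (\<exists>i<N. \<exists>A B. A \<noteq> PI \<and> B \<noteq> PI \<and> w = t2 N i A B)"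
proof -
  obtain j where j: "j < N" "\<forall>k<N. w k \<noteq> PI \<longrightarrow> k = j \<or> k = Suc j mod N"
    using assms(2) unfolding form2_def by blast
  have ne: "Suc j mod N \<noteq> j" using suc_mod_ne[OF assms(3)] .
  have w: "w = t2 N j (w j) (w (Suc j mod N))"
  proof
    fix k
    show "w k = t2 N j (w j) (w (Suc j mod N)) k"
    proof (cases "k < N")
      case True
      then show ?thesis using j ne by (auto simp: t2_def)
    next
      case False
      then have "w k = PI" using assms(1) by (simp add: canon_def)
      moreover have "k \<noteq> j" "k \<noteq> Suc j mod N" using False j(1) assms(3) by auto
      ultimately show ?thesis by (simp add: t2_def)
    qed
  qed
  have sj: "Suc j mod N < N" using assms(3) by simp
  show ?thesis
  proof (cases "w j = PI")
    case True
    then have w': "w = t1 (Suc j mod N) (w (Suc j mod N))" using w by simp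
    show ?thesis
    proof (cases "w (Suc j mod N) = PI")
      case True then show ?thesis using w' by simp
    next
      case False then show ?thesis using w' sj by blast
    qed
  next
    case False
    show ?thesis
    proof (cases "w (Suc j mod N) = PI")
      case True then have "w = t1 j (w j)" using w assms(3) by simp
      then show ?thesis using False j(1) by blast
    next
      case F2: False then show ?thesis using w False j(1) by blast
    qed
  qed
qed

lemma ham_expand: "ham N JX JY hX hY hZ = (\<lambda>a b. \<Sum>i<N.
       of_real JX * pstring N (t2 N i PX PX) a b + of_real JY * pstring N (t2 N i PY PY) a b
     + of_real hX * pstring N (t1 i PX) a b + of_real hY * pstring N (t1 i PY) a b
     + of_real hZ * pstring N (t1 i PZ) a b)"
  unfolding ham_def site1_t site2_t ..

lemma smul_t1t1: "Suc i mod N \<noteq> i \<Longrightarrow> smul (t1 i A) (t1 (Suc i mod N) B) = t2 N i A B"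
  by (auto simp: fun_eq_iff smul_def t1_def t2_def)

lemma sph_t1t1: "i \<noteq> j \<Longrightarrow> sph N (t1 i A) (t1 j B) = 1"
  unfolding sph_def by (rule prod.neutral) (auto simp: t1_def)

lemma Q0_expand: assumes "1 < N" shows "Q0 N hX hY = (\<lambda>a b. \<Sum>i<N. (-1)^(i+1) *
   (of_real hX * of_real hX * pstring N (t2 N i PX PX) a b + of_real hX * of_real hY * pstring N (t2 N i PX PY) a b
  + of_real hY * of_real hX * pstring N (t2 N i PY PX) a b + of_real hY * of_real hY * pstring N (t2 N i PY PY) a b))"
proof -
  have ne: "\<And>i. Suc i mod N \<noteq> i" using suc_mod_ne[OF assms] .
  have ne': "\<And>i. i \<noteq> Suc i mod N" using ne by metis
  show ?thesis
    unfolding Q0_def site1_t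
    by (simp add: mmul_add_left mmul_add_right mmul_cmult_left mmul_cmult_right mmul_pstring
        smul_t1t1[OF ne] sph_t1t1[OF ne'] algebra_simps)
qed

lemma e22: assumes "2 < N" "i < N" "j < N" "A \<noteq> PI" "B \<noteq> PI" "C \<noteq> PI" "D \<noteq> PI"
  shows "(\<forall>k<N. t2 N i A B k = t2 N j C D k) \<longleftrightarrow> (i = j \<and> A = C \<and> B = D)"
proof
  assume h: "\<forall>k<N. t2 N i A B k = t2 N j C D k"
  have ni: "Suc i mod N \<noteq> i" "Suc j mod N \<noteq> j" using suc_mod_ne assms(1) by auto
  have nn: "Suc (Suc j mod N) mod N \<noteq> j" 
  proof
    assume "Suc (Suc j mod N) mod N = j"
    then have "(j + 2) mod N = (j + 0) mod N" using assms by (simp add: mod_Suc_eq)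
    then show False using modcancel[of j 2 N 0] assms by simp
  qed
  have nn': "Suc (Suc i mod N) mod N \<noteq> i" 
  proof
    assume "Suc (Suc i mod N) mod N = i"
    then have "(i + 2) mod N = (i + 0) mod N" using assms by (simp add: mod_Suc_eq)
    then show False using modcancel[of i 2 N 0] assms by simp
  qed
  have si: "Suc i mod N < N" using assms by simp
  have "t2 N i A B i = A" using ni by (simp add: t2_def)
  moreover have "t2 N i A B i = t2 N j C D i" using h assms(2) by blast
  ultimately have hi: "t2 N j C D i = A" by simp
  then have "i = j \<or> i = Suc j mod N" using assms by (auto simp: t2_def split: if_splits)
  moreover have "i \<noteq> Suc j mod N"
  proof
    assume ij: "i = Suc j mod N"
    have "t2 N j C D (Suc i mod N) = B" using h si ni by (auto simp: t2_def)
    moreover have "Suc i mod N \<noteq> j" using ij nn by simp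
    moreover have "Suc i mod N \<noteq> Suc j mod N" using ij ni by simp
    ultimately show False using assms by (simp add: t2_def)
  qed
  ultimately have ij: "i = j" by simp
  then show "i = j \<and> A = C \<and> B = D" using hi h si ni by (auto simp: t2_def)
qed simp

lemma e21: assumes "1 < N" "i < N" "A \<noteq> PI" "B \<noteq> PI"
  shows "\<not> (\<forall>k<N. t2 N i A B k = t1 j C k)" "\<not> (\<forall>k<N. t1 j C k = t2 N i A B k)"
proof -
  have ni: "Suc i mod N \<noteq> i" using suc_mod_ne assms(1) by auto
  have si: "Suc i mod N < N" using assms by simp
  have "t2 N i A B i \<noteq> PI" "t2 N i A B (Suc i mod N) \<noteq> PI" using ni assms by (auto simp: t2_def)
  moreover have "t1 j C i = PI \<or> t1 j C (Suc i mod N) = PI" using ni by (auto simp: t1_def)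
  ultimately show "\<not> (\<forall>k<N. t2 N i A B k = t1 j C k)" "\<not> (\<forall>k<N. t1 j C k = t2 N i A B k)"
    using assms(2) si by metis+
qed

lemma e11: assumes "i < N" "j < N" "A \<noteq> PI" "C \<noteq> PI"
  shows "(\<forall>k<N. t1 i A k = t1 j C k) \<longleftrightarrow> (i = j \<and> A = C)"
  using assms by (auto simp: t1_def)

lemma e0a: assumes "i < N" "A \<noteq> PI" "1 < N" shows "\<not> (\<forall>k<N. PI = t2 N i A B k)"
proof -
  have "t2 N i A B i \<noteq> PI" using assms suc_mod_ne[OF assms(3), of i] by (simp add: t2_def)
  then show ?thesis using assms(1) by metis
qed
lemma e0b: assumes "j < N" "C \<noteq> PI" shows "\<not> (\<forall>k<N. PI = t1 j C k)"
proof -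
  have "t1 j C j \<noteq> PI" using assms by (simp add: t1_def)
  then show ?thesis using assms(1) by metis
qed

lemma coef_ham: "coef N w (ham N JX JY hX hY hZ) = (\<Sum>j<N.
    of_real JX * (if \<forall>k<N. w k = t2 N j PX PX k then 1 else 0)
  + of_real JY * (if \<forall>k<N. w k = t2 N j PY PY k then 1 else 0)
  + of_real hX * (if \<forall>k<N. w k = t1 j PX k then 1 else 0)
  + of_real hY * (if \<forall>k<N. w k = t1 j PY k then 1 else 0)
  + of_real hZ * (if \<forall>k<N. w k = t1 j PZ k then 1 else 0))"
  unfolding ham_expand by (simp only: coef_sum coef_add coef_cmult coef_pstring)

lemma coef_Q0: "1 < N \<Longrightarrow> coef N w (Q0 N hX hY) = (\<Sum>j<N. (-1)^(j+1) * (
    of_real hX * of_real hX * (if \<forall>k<N. w k = t2 N j PX PX k then 1 else 0)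
  + of_real hX * of_real hY * (if \<forall>k<N. w k = t2 N j PX PY k then 1 else 0)
  + of_real hY * of_real hX * (if \<forall>k<N. w k = t2 N j PY PX k then 1 else 0)
  + of_real hY * of_real hY * (if \<forall>k<N. w k = t2 N j PY PY k then 1 else 0)))"
  by (simp only: Q0_expand coef_sum coef_add coef_cmult coef_pstring)

lemma coef_idop: "coef N w (idop N) = (if \<forall>k<N. w k = PI then 1 else 0)"
  by (simp add: idop_def coef_pstring)

lemma sum_single: fixes N :: nat shows "i < N \<Longrightarrow> (\<And>j. j < N \<Longrightarrow> j \<noteq> i \<Longrightarrow> f j = 0) \<Longrightarrow> (\<Sum>j<N. f j) = (f i :: complex)"
proof -
  assume i: "i < N" and z: "\<And>j. j < N \<Longrightarrow> j \<noteq> i \<Longrightarrow> f j = 0"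
  have "(\<Sum>j<N. f j) = (\<Sum>j\<in>{i}. f j)"
    by (rule sum.mono_neutral_right) (use i z in auto)
  then show ?thesis by simp
qed

context
  fixes N :: nat assumes N6: "6 \<le> N"
begin

lemma N2: "2 < N" "1 < N" using N6 by auto

lemma coefH_t2: assumes "i < N" "A \<noteq> PI" "B \<noteq> PI"
  shows "coef N (t2 N i A B) (ham N JX JY hX hY hZ) =
     of_real JX * (if A = PX \<and> B = PX then 1 else 0) + of_real JY * (if A = PY \<and> B = PY then 1 else 0)"
  unfolding coef_ham
  by (rule trans[OF sum_single[OF assms(1)]]) (use assms in \<open>simp_all add: e22[OF N2(1)] e21[OF N2(2)]\<close>)

lemma coefH_t1: assumes "i < N" "A \<noteq> PI"
  shows "coef N (t1 i A) (ham N JX JY hX hY hZ) =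
     of_real hX * (if A = PX then 1 else 0) + of_real hY * (if A = PY then 1 else 0) + of_real hZ * (if A = PZ then 1 else 0)"
  unfolding coef_ham
  by (rule trans[OF sum_single[OF assms(1)]]) (use assms in \<open>simp_all add: e11 e21[OF N2(2)]\<close>)

lemma coefH_id: "coef N (\<lambda>_. PI) (ham N JX JY hX hY hZ) = 0"
  unfolding coef_ham
proof (intro sum.neutral ballI)
  fix x assume "x \<in> {..<N}"
  then have x: "x < N" by simp
  have r: "(\<forall>k<N. PI = t2 N x PX PX k) = False" "(\<forall>k<N. PI = t2 N x PY PY k) = False"
    "(\<forall>k<N. PI = t1 x PX k) = False" "(\<forall>k<N. PI = t1 x PY k) = False" "(\<forall>k<N. PI = t1 x PZ k) = False"
    using e0a[OF x] e0b[OF x] N2 by simp_all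
  show "complex_of_real JX * (if \<forall>k<N. PI = t2 N x PX PX k then 1 else 0) +
        complex_of_real JY * (if \<forall>k<N. PI = t2 N x PY PY k then 1 else 0) +
        complex_of_real hX * (if \<forall>k<N. PI = t1 x PX k then 1 else 0) +
        complex_of_real hY * (if \<forall>k<N. PI = t1 x PY k then 1 else 0) +
        complex_of_real hZ * (if \<forall>k<N. PI = t1 x PZ k then 1 else 0) = 0"
    by (simp only: r if_False mult_zero_right add_0_right)
qed

lemma coefQ0_t2: assumes "i < N" "A \<noteq> PI" "B \<noteq> PI"
  shows "coef N (t2 N i A B) (Q0 N hX hY) = (-1)^(i+1) * (
     of_real hX * of_real hX * (if A = PX \<and> B = PX then 1 else 0) + of_real hX * of_real hY * (if A = PX \<and> B = PY then 1 else 0)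
   + of_real hY * of_real hX * (if A = PY \<and> B = PX then 1 else 0) + of_real hY * of_real hY * (if A = PY \<and> B = PY then 1 else 0))"
  unfolding coef_Q0[OF N2(2)]
  by (rule trans[OF sum_single[OF assms(1)]]) (use assms in \<open>simp_all add: e22[OF N2(1)]\<close>)

lemma coefQ0_t1: assumes "i < N" "A \<noteq> PI"
  shows "coef N (t1 i A) (Q0 N hX hY) = 0"
  unfolding coef_Q0[OF N2(2)] using assms by (intro sum.neutral) (simp add: e21[OF N2(2)])

lemma coefQ0_id: "coef N (\<lambda>_. PI) (Q0 N hX hY) = 0"
  unfolding coef_Q0[OF N2(2)]
proof (intro sum.neutral ballI)
  fix x assume "x \<in> {..<N}"
  then have x: "x < N" by simp
  have r: "(\<forall>k<N. PI = t2 N x PX PX k) = False" "(\<forall>k<N. PI = t2 N x PY PY k) = False"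
    "(\<forall>k<N. PI = t2 N x PX PY k) = False" "(\<forall>k<N. PI = t2 N x PY PX k) = False"
    using e0a[OF x] N2 by simp_all
  show "(- 1) ^ (x + 1) *
        (complex_of_real hX * complex_of_real hX * (if \<forall>k<N. PI = t2 N x PX PX k then 1 else 0) +
         complex_of_real hX * complex_of_real hY * (if \<forall>k<N. PI = t2 N x PX PY k then 1 else 0) +
         complex_of_real hY * complex_of_real hX * (if \<forall>k<N. PI = t2 N x PY PX k then 1 else 0) +
         complex_of_real hY * complex_of_real hY * (if \<forall>k<N. PI = t2 N x PY PY k then 1 else 0)) = 0"
    by (simp only: r if_False mult_zero_right add_0_right)
qed

lemma form2_t: "j < N \<Longrightarrow> form2 N (t2 N j A B)" "j < N \<Longrightarrow> form2 N (t1 j A)"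
  unfolding form2_def by (auto simp: t2_def t1_def)

lemma coefH_nf: "\<not> form2 N w \<Longrightarrow> coef N w (ham N JX JY hX hY hZ) = 0"
proof -
  assume nf: "\<not> form2 N w"
  have a: "\<not> (\<forall>k<N. w k = t2 N j A B k)" if "j < N" for j A B
    using nf form2_cong form2_t(1)[OF that] by blast
  have b: "\<not> (\<forall>k<N. w k = t1 j A k)" if "j < N" for j A
    using nf form2_cong form2_t(2)[OF that] by blast
  show ?thesis
    unfolding coef_ham by (intro sum.neutral) (simp add: a b)
qed

lemma coefQ0_nf: "\<not> form2 N w \<Longrightarrow> coef N w (Q0 N hX hY) = 0"
proof -
  assume nf: "\<not> form2 N w"
  have a: "\<not> (\<forall>k<N. w k = t2 N j A B k)" if "j < N" for j A B
    using nf form2_cong form2_t(1)[OF that] by blast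
  have b: "\<not> (\<forall>k<N. w k = t1 j A k)" if "j < N" for j A
    using nf form2_cong form2_t(2)[OF that] by blast
  show ?thesis
    unfolding coef_Q0[OF N2(2)] by (intro sum.neutral) (simp add: a b)
qed

end

lemma canon_t: "1 < N \<Longrightarrow> i < N \<Longrightarrow> canon N (t2 N i A B)" "i < N \<Longrightarrow> canon N (t1 i A)"
  "canon N (\<lambda>_. PI)"
proof -
  assume N: "1 < N" "i < N"
  have "Suc i mod N < N" using N by simp
  show "canon N (t2 N i A B)" unfolding canon_def
  proof (intro allI impI)
    fix k assume "N \<le> k"
    then have "k \<noteq> i" "k \<noteq> Suc i mod N" using N \<open>Suc i mod N < N\<close> by linarith+
    then show "t2 N i A B k = PI" by (simp add: t2_def)
  qed
qed (auto simp: canon_def t1_def)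

lemma pspan_ham: "1 < N \<Longrightarrow> pspan N (ham N JX JY hX hY hZ)"
  unfolding ham_expand
  by (intro pspan_sum pspan_add pspan_cmult pspan_pstring ballI finite_lessThan) (auto intro: canon_t)

lemma pspan_Q0: "1 < N \<Longrightarrow> pspan N (Q0 N hX hY)"
  unfolding Q0_expand
  by (intro pspan_sum pspan_add pspan_cmult pspan_pstring ballI finite_lessThan) (auto intro: canon_t)

lemma pspan_idop: "pspan N (idop N)"
  unfolding idop_def by (intro pspan_pstring canon_t)

lemma pspan_local: "local_op k N Q \<Longrightarrow> pspan N Q"
  unfolding local_op_def pspan_def canon_def by blast

lemma main_decomp:
  fixes Q :: op
  assumes N6: "6 \<le> N" and JX0: "JX \<noteq> 0" and JY0: "JY \<noteq> 0" and hh: "(hX, hY) \<noteq> (0, 0)"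
    and loc2: "local_op 2 N Q" and com: "commutes N Q (ham N JX JY hX hY hZ)"
  shows "\<exists>\<alpha> \<beta> \<gamma>. Q = (\<lambda>a b. \<alpha> * idop N a b + \<beta> * ham N JX JY hX hY hZ a b + \<gamma> * Q0 N hX hY a b)
     \<and> (\<not> special N JX JY hX hY hZ \<longrightarrow> \<gamma> = 0)
     \<and> (\<forall>i<N. coef N (t2 N i PX PX) Q = \<beta> * of_real JX + \<gamma> * (-1)^(i+1) * of_real hX ^ 2
            \<and> coef N (t2 N i PY PY) Q = \<beta> * of_real JY + \<gamma> * (-1)^(i+1) * of_real hY ^ 2)"
proof -
  have N1: "1 < N" "0 < N" using N6 by auto
  have L: "loc N (\<lambda>w. coef N w Q)" by (rule local2_loc[OF loc2 N1(2)])
  have Heq: "\<forall>u. (\<Sum>i<N. Fj N JX JY hX hY hZ (\<lambda>w. coef N w Q) u i) = 0"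
    using comm_eq[OF com] by blast
  obtain \<beta> \<gamma> where bg: "\<not> special N JX JY hX hY hZ \<longrightarrow> \<gamma> = 0"
    and V: "\<forall>i<N.
     coef N (t2 N i PX PX) Q = \<beta> * of_real JX + \<gamma> * (-1)^(i+1) * of_real hX ^ 2 \<and>
     coef N (t2 N i PY PY) Q = \<beta> * of_real JY + \<gamma> * (-1)^(i+1) * of_real hY ^ 2 \<and>
     coef N (t2 N i PX PY) Q = \<gamma> * (-1)^(i+1) * of_real hX * of_real hY \<and>
     coef N (t2 N i PY PX) Q = \<gamma> * (-1)^(i+1) * of_real hX * of_real hY \<and>
     coef N (t2 N i PX PZ) Q = 0 \<and> coef N (t2 N i PY PZ) Q = 0 \<and> coef N (t2 N i PZ PZ) Q = 0 \<and>
     coef N (t2 N i PZ PX) Q = 0 \<and> coef N (t2 N i PZ PY) Q = 0 \<and>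
     coef N (t1 i PX) Q = \<beta> * of_real hX \<and> coef N (t1 i PY) Q = \<beta> * of_real hY \<and> coef N (t1 i PZ) Q = \<beta> * of_real hZ"
    using coef_structure[OF N6 L Heq JX0 JY0 hh] by blast
  define \<alpha> where "\<alpha> = coef N (\<lambda>_. PI) Q"
  define D where "D = (\<lambda>a b. Q a b - (\<alpha> * idop N a b + \<beta> * ham N JX JY hX hY hZ a b + \<gamma> * Q0 N hX hY a b))"
  have pD: "pspan N D" unfolding D_def
    by (intro pspan_diff pspan_add pspan_cmult pspan_local[OF loc2] pspan_idop pspan_ham pspan_Q0 N1)
  have cD: "coef N w D = coef N w Q - (\<alpha> * coef N w (idop N) + \<beta> * coef N w (ham N JX JY hX hY hZ) + \<gamma> * coef N w (Q0 N hX hY))" for w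
    unfolding D_def by (simp only: coef_diff coef_add coef_cmult)
  have z: "coef N w D = 0" if cw: "canon N w" for w
  proof (cases "form2 N w")
    case False
    have "coef N w Q = 0" using L False unfolding loc_def by blast
    moreover have "coef N w (idop N) = 0"
    proof -
      have "form2 N (\<lambda>_. PI)" unfolding form2_def using N1 by auto
      then have "\<not> (\<forall>k<N. w k = PI)" using False form2_cong[of N "\<lambda>_. PI" w] by auto
      then show ?thesis by (simp add: coef_idop)
    qed
    ultimately show ?thesis unfolding cD using coefH_nf[OF N6 False] coefQ0_nf[OF N6 False] by simp
  next
    case True
    from form2_cases[OF cw True N1(1)]
    consider "w = (\<lambda>_. PI)" | i A where "i < N" "A \<noteq> PI" "w = t1 i A"
      | i A B where "i < N" "A \<noteq> PI" "B \<noteq> PI" "w = t2 N i A B" by blast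
    then show ?thesis
    proof cases
      case 1
      then show ?thesis unfolding cD using coefH_id[OF N6] coefQ0_id[OF N6] by (simp add: \<alpha>_def coef_idop)
    next
      case 2
      have "\<not> (\<forall>k<N. t1 i A k = PI)" using e0b[OF 2(1,2)] by metis
      then have id0: "coef N (t1 i A) (idop N) = 0" by (simp add: coef_idop)
      show ?thesis using V 2 unfolding cD 2(3) id0 coefH_t1[OF N6 2(1,2)] coefQ0_t1[OF N6 2(1,2)]
        by (cases A) auto
    next
      case 3
      have "\<not> (\<forall>k<N. t2 N i A B k = PI)" using e0a[OF 3(1,2) N1(1)] by metis
      then have id0: "coef N (t2 N i A B) (idop N) = 0" by (simp add: coef_idop)
      show ?thesis using V 3 unfolding cD 3(4) id0 coefH_t2[OF N6 3(1,2,3)] coefQ0_t2[OF N6 3(1,2,3)]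
        by (cases A; cases B) (auto simp: algebra_simps power2_eq_square)
    qed
  qed
  have "D = (\<lambda>a b. 0)" using pspan_zero[OF pD] z by blast
  then have "Q = (\<lambda>a b. \<alpha> * idop N a b + \<beta> * ham N JX JY hX hY hZ a b + \<gamma> * Q0 N hX hY a b)"
    unfolding D_def by (metis (no_types, lifting) eq_iff_diff_eq_0)
  then show ?thesis using bg V by blast
qed

fun hcf :: "real \<Rightarrow> real \<Rightarrow> pauli \<Rightarrow> complex" where
  "hcf hX hY PX = of_real hX" | "hcf hX hY PY = of_real hY" | "hcf hX hY PZ = 0" | "hcf hX hY PI = 0"

context wind begin

lemma win_q0:
  fixes q :: "(nat \<Rightarrow> pauli) \<Rightarrow> complex" and c :: complex
  assumes L: "loc N q"
   and qa: "\<And>A B. A \<noteq> PI \<Longrightarrow> B \<noteq> PI \<Longrightarrow> q (t2 N p A B) = c * hcf hX hY A * hcf hX hY B"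
   and qb: "\<And>A B. A \<noteq> PI \<Longrightarrow> B \<noteq> PI \<Longrightarrow> q (t2 N w1 A B) = - c * hcf hX hY A * hcf hX hY B"
   and qc: "\<And>A B. A \<noteq> PI \<Longrightarrow> B \<noteq> PI \<Longrightarrow> q (t2 N w2 A B) = c * hcf hX hY A * hcf hX hY B"
   and qd: "\<And>A B. A \<noteq> PI \<Longrightarrow> B \<noteq> PI \<Longrightarrow> q (t2 N w3 A B) = - c * hcf hX hY A * hcf hX hY B"
   and q1: "\<And>j A. j < N \<Longrightarrow> A \<noteq> PI \<Longrightarrow> q (t1 j A) = 0" and q0: "q (\<lambda>_. PI) = 0"
   and hZ: "hZ = 0" and hX0: "hX \<noteq> 0"
   and J: "complex_of_real JY = - complex_of_real JX * complex_of_real hY ^ 2 / complex_of_real hX ^ 2"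
  shows "(\<Sum>i<N. Fj N JX JY hX hY hZ q (wn PI A D C PI) i) = 0"
  apply (simp only: window_sum)
  apply (simp only: Fj_def t_wn smul_wn sph_wn)
  apply (cases A; cases D; cases C)
  apply (simp_all add: wn_t wn_far[OF L] N6 qa qb qc qd q1 q0 hZ)
  using hX0 apply (simp_all add: J field_simps)
  apply (simp_all add: power2_eq_square mult_ac)
  done

end

lemma comm_identity:
  "(\<Sum>i<N. Fj N JX JY hX hY hZ (\<lambda>w. coef N w Q) u i) =
   coef N u (mmul N Q (ham N JX JY hX hY hZ)) - coef N u (mmul N (ham N JX JY hX hY hZ) Q)"
proof -
  have l: "coef N u (mmul N Q (ham N JX JY hX hY hZ)) = (\<Sum>i<N.
       of_real JX * (sph N (t2 N i PX PX) u * coef N (smul u (t2 N i PX PX)) Q)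
     + of_real JY * (sph N (t2 N i PY PY) u * coef N (smul u (t2 N i PY PY)) Q)
     + of_real hX * (sph N (t1 i PX) u * coef N (smul u (t1 i PX)) Q)
     + of_real hY * (sph N (t1 i PY) u * coef N (smul u (t1 i PY)) Q)
     + of_real hZ * (sph N (t1 i PZ) u * coef N (smul u (t1 i PZ)) Q))"
    unfolding ham_def site1_t site2_t
    by (simp only: mmul_sum_right mmul_add_right mmul_cmult_right coef_sum coef_add coef_cmult coef_mmul_right)
  have r: "coef N u (mmul N (ham N JX JY hX hY hZ) Q) = (\<Sum>i<N.
       of_real JX * (sph N u (t2 N i PX PX) * coef N (smul u (t2 N i PX PX)) Q)
     + of_real JY * (sph N u (t2 N i PY PY) * coef N (smul u (t2 N i PY PY)) Q)
     + of_real hX * (sph N u (t1 i PX) * coef N (smul u (t1 i PX)) Q)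
     + of_real hY * (sph N u (t1 i PY) * coef N (smul u (t1 i PY)) Q)
     + of_real hZ * (sph N u (t1 i PZ) * coef N (smul u (t1 i PZ)) Q))"
    unfolding ham_def site1_t site2_t
    by (simp only: mmul_sum_left mmul_add_left mmul_cmult_left coef_sum coef_add coef_cmult coef_mmul_left)
  show ?thesis
    unfolding l r Fj_def by (simp add: sum_subtractf[symmetric] algebra_simps)
qed

lemma pph_asym: "pph a b \<noteq> pph b a \<Longrightarrow> a \<noteq> PI \<and> b \<noteq> PI \<and> a \<noteq> b"
  by (cases a; cases b) auto

lemma term_run:
  fixes q :: "(nat \<Rightarrow> pauli) \<Rightarrow> complex"
  assumes N6: "6 \<le> N" and L: "loc N q" and i: "i < N"
    and t: "\<forall>r<N. t r \<noteq> PI \<longrightarrow> r = i \<or> r = Suc i mod N"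
    and ne: "sph N t w \<noteq> sph N w t" and nz: "q (smul w t) \<noteq> 0"
  shows "\<exists>b<N. \<forall>r<N. w r \<noteq> PI \<longrightarrow> r = b \<or> r = Suc b mod N \<or> r = Suc (Suc b mod N) mod N"
proof -
  obtain k where k: "k < N" "\<forall>r<N. smul w t r \<noteq> PI \<longrightarrow> r = k \<or> r = Suc k mod N"
    using L nz unfolding loc_def form2_def by blast
  obtain m where m: "m < N" "pph (t m) (w m) \<noteq> pph (w m) (t m)"
  proof -
    have "\<exists>m<N. pph (t m) (w m) \<noteq> pph (w m) (t m)"
    proof (rule ccontr)
      assume "\<not> ?thesis"
      then have "sph N t w = sph N w t" unfolding sph_def by (intro prod.cong) auto
      then show False using ne by simp
    qed
    then show ?thesis using that by blast
  qed
  have tm: "t m \<noteq> PI" "w m \<noteq> PI" "t m \<noteq> w m" using pph_asym[OF m(2)] by auto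
  then have "smul w t m \<noteq> PI" by (simp add: smul_def pprod_eq_PI)
  then have mk: "m = k \<or> m = Suc k mod N" using k m(1) by blast
  have mi: "m = i \<or> m = Suc i mod N" using t tm m(1) by blast
  have wr: "r = k \<or> r = Suc k mod N \<or> r = i \<or> r = Suc i mod N" if "r < N" "w r \<noteq> PI" for r
  proof (cases "t r = PI")
    case True
    then have "smul w t r \<noteq> PI" using that by (simp add: smul_def)
    then show ?thesis using k that by blast
  next
    case False then show ?thesis using t that by blast
  qed
  have sk: "Suc k mod N < N" "Suc i mod N < N" using N6 by auto
  show ?thesis
  proof -
    consider "m = k" "m = i" | "m = k" "m = Suc i mod N" | "m = Suc k mod N" "m = i"
      | "m = Suc k mod N" "m = Suc i mod N" using mk mi by blast
    then show ?thesis
    proof cases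
      case 1 then show ?thesis using wr i by (intro exI[of _ i]) auto
    next
      case 2 then show ?thesis using wr i by (intro exI[of _ i]) auto
    next
      case 3 then show ?thesis using wr k(1) by (intro exI[of _ k]) auto
    next
      case 4
      then have "k = i" using nx_inj[of k N i] k(1) i by simp
      then show ?thesis using wr i 4 by (intro exI[of _ i]) auto
    qed
  qed
qed


lemma sph_cong: "\<forall>r<N. u r = u' r \<Longrightarrow> sph N t u = sph N t u' \<and> sph N u t = sph N u' t"
  unfolding sph_def by (auto intro!: prod.cong)

lemma E_reduce:
  fixes q :: "(nat \<Rightarrow> pauli) \<Rightarrow> complex"
  assumes N6: "6 \<le> N" and L: "loc N q" and R: "\<And>z z'. \<forall>r<N. z r = z' r \<Longrightarrow> q z = q z'"
   and W: "\<And>p A D C. p < N \<Longrightarrow> (\<Sum>i<N. Fj N JX JY hX hY hZ q (wind.wn N p PI A D C PI) i) = 0"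
  shows "(\<Sum>i<N. Fj N JX JY hX hY hZ q w i) = 0"
proof (cases "\<exists>b<N. \<forall>r<N. w r \<noteq> PI \<longrightarrow> r = b \<or> r = Suc b mod N \<or> r = Suc (Suc b mod N) mod N")
  case True
  then obtain b where b: "b < N" "\<forall>r<N. w r \<noteq> PI \<longrightarrow> r = b \<or> r = Suc b mod N \<or> r = Suc (Suc b mod N) mod N"
    by blast
  obtain p where p: "p < N" "Suc p mod N = b" using pred_ex[OF b(1)] by blast
  interpret W: wind N p using N6 p by unfold_locales auto
  have w1: "W.w1 = b" using p(2) unfolding W.w1_def .
  have w2: "W.w2 = Suc b mod N" by (simp only: W.w2_def w1)
  have w3: "W.w3 = Suc (Suc b mod N) mod N" by (simp only: W.w3_def w2)
  define w' where "w' = W.wn PI (w W.w1) (w W.w2) (w W.w3) PI"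
  have eq: "\<forall>r<N. w' r = w r"
  proof (intro allI impI)
    fix r assume r: "r < N"
    show "w' r = w r"
    proof (cases "r = W.w1 \<or> r = W.w2 \<or> r = W.w3")
      case True then show ?thesis unfolding w'_def W.wn_apply by auto
    next
      case False
      then have "w r = PI" using b(2) r unfolding w1 w2 w3 by auto
      then show ?thesis using False unfolding w'_def W.wn_apply by auto
    qed
  qed
  have smeq: "\<forall>r<N. smul w' t r = smul w t r" for t using eq by (simp add: smul_def)
  have inv: "Fj N JX JY hX hY hZ q w' i = Fj N JX JY hX hY hZ q w i" for i
    unfolding Fj_def using sph_cong[OF eq] R[OF smeq] by simp
  have "(\<Sum>i<N. Fj N JX JY hX hY hZ q w i) = (\<Sum>i<N. Fj N JX JY hX hY hZ q w' i)"
    using inv by simp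
  also have "\<dots> = 0" unfolding w'_def by (rule W[OF p(1)])
  finally show ?thesis .
next
  case False
  show ?thesis
  proof (rule sum.neutral, intro ballI)
    fix i assume "i \<in> {..<N}"
    then have i: "i < N" by simp
    have z: "(sph N t w - sph N w t) * q (smul w t) = 0" if "\<forall>r<N. t r \<noteq> PI \<longrightarrow> r = i \<or> r = Suc i mod N" for t
    proof (rule ccontr)
      assume "(sph N t w - sph N w t) * q (smul w t) \<noteq> 0"
      then have "sph N t w \<noteq> sph N w t" "q (smul w t) \<noteq> 0" by auto
      then show False using term_run[OF N6 L i that] False by blast
    qed
    have ta: "\<forall>r<N. t2 N i A B r \<noteq> PI \<longrightarrow> r = i \<or> r = Suc i mod N" for A B by (auto simp: t2_def)
    have tb: "\<forall>r<N. t1 i A r \<noteq> PI \<longrightarrow> r = i \<or> r = Suc i mod N" for A by (auto simp: t1_def)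
    show "Fj N JX JY hX hY hZ q w i = 0"
      unfolding Fj_def by (simp only: mult.assoc z[OF ta] z[OF tb] mult_zero_right add_0_right)
  qed
qed


lemma pstring_cong: "\<forall>r<N. z r = z' r \<Longrightarrow> pstring N z = pstring N z'"
  unfolding pstring_def by (intro ext) (auto intro!: prod.cong)

lemma sign_nx: assumes "even N" "i < N" shows "(-1::complex)^(Suc i mod N + 1) = - ((-1)^(i+1))"
proof (cases "Suc i < N")
  case True then show ?thesis by simp
next
  case False
  then have "Suc i = N" using assms by simp
  then show ?thesis using assms by (simp add: power_add)
qed

lemma Q0_val: assumes N6: "6 \<le> N" "j < N" "A \<noteq> PI" "B \<noteq> PI"
  shows "coef N (t2 N j A B) (Q0 N hX hY) = (-1)^(j+1) * hcf hX hY A * hcf hX hY B"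
  unfolding coefQ0_t2[OF assms] using assms by (cases A; cases B) auto

lemma Q0_comm:
  assumes N6: "6 \<le> N" and sp: "special N JX JY hX hY hZ"
  shows "commutes N (Q0 N hX hY) (ham N JX JY hX hY hZ)"
proof -
  have ev: "even N" and hZ: "hZ = 0" and hX0: "hX \<noteq> 0" and JYr: "JY = - JX * (hY / hX) ^ 2"
    using sp unfolding special_def by auto
  have J: "complex_of_real JY = - complex_of_real JX * complex_of_real hY ^ 2 / complex_of_real hX ^ 2"
    unfolding JYr by (simp add: power_divide)
  define q where "q = (\<lambda>w. coef N w (Q0 N hX hY))"
  have N1: "1 < N" using N6 by simp
  have L: "loc N q" unfolding loc_def q_def using coefQ0_nf[OF N6] by blast
  have R: "q z = q z'" if "\<forall>r<N. z r = z' r" for z z'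
    unfolding q_def coef_def pstring_cong[OF that] ..
  have W: "(\<Sum>i<N. Fj N JX JY hX hY hZ q (wind.wn N p PI A D C PI) i) = 0" if p: "p < N" for p A D C
  proof -
    interpret W: wind N p using N6 p by unfold_locales auto
    have sg1: "(-1::complex)^(W.w1+1) = - ((-1)^(p+1))" using sign_nx[OF ev p] by (simp only: W.wsuc)
    have "(-1::complex)^(W.w2+1) = - ((-1)^(W.w1+1))" using sign_nx[OF ev W.wlt(1)] by (simp only: W.wsuc)
    then have sg2: "(-1::complex)^(W.w2+1) = (-1)^(p+1)" unfolding sg1 minus_minus .
    have "(-1::complex)^(W.w3+1) = - ((-1)^(W.w2+1))" using sign_nx[OF ev W.wlt(2)] by (simp only: W.wsuc)
    then have sg3: "(-1::complex)^(W.w3+1) = - ((-1)^(p+1))" unfolding sg2 .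
    show ?thesis
    proof (rule W.win_q0[where c="(-1)^(p+1)"])
      show "loc N q" by (rule L)
      show "q (t2 N p A B) = (-1)^(p+1) * hcf hX hY A * hcf hX hY B" if "A \<noteq> PI" "B \<noteq> PI" for A B
        unfolding q_def using Q0_val[OF N6 p that] by simp
      show "q (t2 N W.w1 A B) = - ((-1)^(p+1)) * hcf hX hY A * hcf hX hY B" if "A \<noteq> PI" "B \<noteq> PI" for A B
        unfolding q_def Q0_val[OF N6 W.wlt(1) that] sg1 ..
      show "q (t2 N W.w2 A B) = (-1)^(p+1) * hcf hX hY A * hcf hX hY B" if "A \<noteq> PI" "B \<noteq> PI" for A B
        unfolding q_def Q0_val[OF N6 W.wlt(2) that] sg2 ..
      show "q (t2 N W.w3 A B) = - ((-1)^(p+1)) * hcf hX hY A * hcf hX hY B" if "A \<noteq> PI" "B \<noteq> PI" for A B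
        unfolding q_def Q0_val[OF N6 W.wlt(3) that] sg3 ..
      show "q (t1 j A) = 0" if "j < N" "A \<noteq> PI" for j A
        unfolding q_def using coefQ0_t1[OF N6 that] .
      show "q (\<lambda>_. PI) = 0" unfolding q_def by (rule coefQ0_id[OF N6])
    qed (rule hZ, rule hX0, rule J)
  qed
  have E: "(\<Sum>i<N. Fj N JX JY hX hY hZ q w i) = 0" for w
    by (rule E_reduce[OF N6 L R W])
  define D where "D = (\<lambda>a b. mmul N (Q0 N hX hY) (ham N JX JY hX hY hZ) a b - mmul N (ham N JX JY hX hY hZ) (Q0 N hX hY) a b)"
  have pD: "pspan N D" unfolding D_def
    by (intro pspan_diff pspan_mmul pspan_Q0 pspan_ham N1)
  have "coef N w D = 0" for w
    unfolding D_def coef_diff comm_identity[symmetric] using E unfolding q_def .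
  then have "D = (\<lambda>a b. 0)" using pspan_zero[OF pD] by blast
  then have h: "\<And>a b. D a b = 0" by simp
  show ?thesis unfolding commutes_def
  proof (intro ext)
    fix a b
    show "mmul N (Q0 N hX hY) (ham N JX JY hX hY hZ) a b = mmul N (ham N JX JY hX hY hZ) (Q0 N hX hY) a b"
      using h[of a b] unfolding D_def by simp
  qed
qed

lemma local1_t2_zero:
  assumes N6: "6 \<le> N" and l1: "local_op 1 N Q" and i: "i < N" and A: "A \<noteq> PI" and B: "B \<noteq> PI"
  shows "coef N (t2 N i A B) Q = 0"
proof (rule ccontr)
  assume nz: "coef N (t2 N i A B) Q \<noteq> 0"
  obtain S c where S: "finite S" "\<forall>s\<in>S. (\<forall>i\<ge>N. s i = PI) \<and> support N s \<le> 1"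
     "Q = (\<lambda>a b. \<Sum>s\<in>S. c s * pstring N s a b)"
    using l1 unfolding local_op_def by blast
  obtain s where s: "s \<in> S" "\<forall>k<N. t2 N i A B k = s k" using coef_lincomb_nz nz S(3) by blast
  have ne: "Suc i mod N \<noteq> i" using suc_mod_ne N6 by simp
  have si: "Suc i mod N < N" using N6 by simp
  have "s i = t2 N i A B i" "s (Suc i mod N) = t2 N i A B (Suc i mod N)" using s(2) i si by auto
  then have "s i \<noteq> PI" "s (Suc i mod N) \<noteq> PI" using ne A B by (simp_all add: t2_def)
  then have "i = Suc i mod N" using support_le1[of N s i "Suc i mod N"] S(2) s(1) i N6 by simp
  then show False using ne by simp
qed

theorem mainTheorem4:
  fixes N :: nat and JX JY hX hY hZ :: real and Q :: op
  assumes "N \<ge> 6" and "JX \<noteq> 0" and "JY \<noteq> 0" and "(hX, hY) \<noteq> (0, 0)"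
    and "local_op 2 N Q"
    and "commutes N Q (ham N JX JY hX hY hZ)"
  shows "(even N \<and> hZ = 0 \<and> hX \<noteq> 0 \<and> hY \<noteq> 0 \<and> JY = - JX * (hY / hX) ^ 2 \<longrightarrow>
            (\<exists>\<alpha> \<beta> \<gamma> :: complex. Q = (\<lambda>a b. \<alpha> * idop N a b + \<beta> * ham N JX JY hX hY hZ a b
                                         + \<gamma> * Q0 N hX hY a b))
            \<and> commutes N (Q0 N hX hY) (ham N JX JY hX hY hZ))
       \<and> (\<not> (even N \<and> hZ = 0 \<and> hX \<noteq> 0 \<and> hY \<noteq> 0 \<and> JY = - JX * (hY / hX) ^ 2) \<longrightarrow>
            (\<exists>\<alpha> \<beta> :: complex. Q = (\<lambda>a b. \<alpha> * idop N a b + \<beta> * ham N JX JY hX hY hZ a b)))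
       \<and> (local_op 1 N Q \<longrightarrow> (\<exists>\<alpha> :: complex. Q = (\<lambda>a b. \<alpha> * idop N a b)))"
proof -
  note N6 = assms(1)
  obtain \<alpha> \<beta> \<gamma> where Qf: "Q = (\<lambda>a b. \<alpha> * idop N a b + \<beta> * ham N JX JY hX hY hZ a b + \<gamma> * Q0 N hX hY a b)"
    and bg: "\<not> special N JX JY hX hY hZ \<longrightarrow> \<gamma> = 0"
    and V: "\<forall>i<N. coef N (t2 N i PX PX) Q = \<beta> * of_real JX + \<gamma> * (-1)^(i+1) * of_real hX ^ 2
            \<and> coef N (t2 N i PY PY) Q = \<beta> * of_real JY + \<gamma> * (-1)^(i+1) * of_real hY ^ 2"
    using main_decomp[OF assms] by blast
  have c1: "even N \<and> hZ = 0 \<and> hX \<noteq> 0 \<and> hY \<noteq> 0 \<and> JY = - JX * (hY / hX) ^ 2 \<longrightarrow>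
            (\<exists>\<alpha> \<beta> \<gamma> :: complex. Q = (\<lambda>a b. \<alpha> * idop N a b + \<beta> * ham N JX JY hX hY hZ a b
                                         + \<gamma> * Q0 N hX hY a b))
            \<and> commutes N (Q0 N hX hY) (ham N JX JY hX hY hZ)"
  proof
    assume sp: "even N \<and> hZ = 0 \<and> hX \<noteq> 0 \<and> hY \<noteq> 0 \<and> JY = - JX * (hY / hX) ^ 2"
    have "special N JX JY hX hY hZ" using sp unfolding special_def .
    then show "(\<exists>\<alpha> \<beta> \<gamma> :: complex. Q = (\<lambda>a b. \<alpha> * idop N a b + \<beta> * ham N JX JY hX hY hZ a b
                                         + \<gamma> * Q0 N hX hY a b))
            \<and> commutes N (Q0 N hX hY) (ham N JX JY hX hY hZ)"
      using Qf Q0_comm[OF N6] by blast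
  qed
  have c2: "\<not> (even N \<and> hZ = 0 \<and> hX \<noteq> 0 \<and> hY \<noteq> 0 \<and> JY = - JX * (hY / hX) ^ 2) \<longrightarrow>
            (\<exists>\<alpha> \<beta> :: complex. Q = (\<lambda>a b. \<alpha> * idop N a b + \<beta> * ham N JX JY hX hY hZ a b))"
  proof
    assume "\<not> (even N \<and> hZ = 0 \<and> hX \<noteq> 0 \<and> hY \<noteq> 0 \<and> JY = - JX * (hY / hX) ^ 2)"
    then have "\<gamma> = 0" using bg unfolding special_def by blast
    then show "\<exists>\<alpha> \<beta> :: complex. Q = (\<lambda>a b. \<alpha> * idop N a b + \<beta> * ham N JX JY hX hY hZ a b)"
      using Qf by auto
  qed
  have c3: "local_op 1 N Q \<longrightarrow> (\<exists>\<alpha> :: complex. Q = (\<lambda>a b. \<alpha> * idop N a b))"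
  proof
    assume l1: "local_op 1 N Q"
    have z: "\<And>i A B. i < N \<Longrightarrow> A \<noteq> PI \<Longrightarrow> B \<noteq> PI \<Longrightarrow> coef N (t2 N i A B) Q = 0"
      using local1_t2_zero[OF N6 l1] by blast
    have 0: "0 < N" "1 < N" using N6 by auto
    have x0: "\<beta> * of_real JX - \<gamma> * of_real hX ^ 2 = 0" using V z[of 0 PX PX] 0 by simp
    have x1: "\<beta> * of_real JX + \<gamma> * of_real hX ^ 2 = 0" using V z[of 1 PX PX] 0 by simp
    have y0: "\<beta> * of_real JY - \<gamma> * of_real hY ^ 2 = 0" using V z[of 0 PY PY] 0 by simp
    have y1: "\<beta> * of_real JY + \<gamma> * of_real hY ^ 2 = 0" using V z[of 1 PY PY] 0 by simp
    have "\<beta> * of_real JX = 0" using x0 x1 by algebra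
    then have b0: "\<beta> = 0" using assms(2) by simp
    have "\<gamma> * of_real hX ^ 2 = 0" "\<gamma> * of_real hY ^ 2 = 0" using x0 x1 y0 y1 by algebra+
    then have g0: "\<gamma> = 0" using assms(4) by auto
    show "\<exists>\<alpha> :: complex. Q = (\<lambda>a b. \<alpha> * idop N a b)"
      using Qf b0 g0 by auto
  qed
  show ?thesis using c1 c2 c3 by blast
qed

end
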